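(* A polynomial $F\in\mathbb C[x,y,s,t]$ of degree $d$ is Cartesian if and only if there exist sets $I,J\subset\mathbb C^2$ with $|I|,|J|>d^2$ such that $I\times J\subset Z(F)$.
   Context: $I\times J$ is viewed as a subset of $\mathbb C^4$ with coordinates $(x,y,s,t)$, $I$ in the $(x,y)$-coordinates and $J$ in the $(s,t)$-coordinates; $Z(F)$ is the complex zero set of $F$. $F$ is Cartesian if there exist $G\in\mathbb C[x,y]\setminus\mathbb C$, $K\in\mathbb C[s,t]\setminus\mathbb C$ and $H,L\in\mathbb C[x,y,s,t]$ with $F=G(x,y)H(x,y,s,t)+K(s,t)L(x,y,s,t)$. *)

theory Defs
  imports "HOL-Analysis.Analysis" "HOL-Library.Poly_Mapping"
begin

text \<open>Variable indices: 0 = x, 1 = y, 2 = s, 3 = t.\<close>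

type_synonym mpoly = "(nat \<Rightarrow>\<^sub>0 nat) \<Rightarrow>\<^sub>0 complex"

definition poly_in_vars :: "nat set \<Rightarrow> mpoly \<Rightarrow> bool" where
  "poly_in_vars V p \<longleftrightarrow> (\<forall>m \<in> Poly_Mapping.keys p. Poly_Mapping.keys m \<subseteq> V)"

definition is_const_mpoly :: "mpoly \<Rightarrow> bool" where
  "is_const_mpoly p \<longleftrightarrow> Poly_Mapping.keys p \<subseteq> {0}"

text \<open>Total degree (the zero polynomial gets degree 0).\<close>
definition mon_deg :: "(nat \<Rightarrow>\<^sub>0 nat) \<Rightarrow> nat" where
  "mon_deg m = (\<Sum>i\<in>Poly_Mapping.keys m. Poly_Mapping.lookup m i)"

definition total_degree :: "mpoly \<Rightarrow> nat" where
  "total_degree p = Max (insert 0 (mon_deg ` Poly_Mapping.keys p))"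

definition mpoly_eval :: "mpoly \<Rightarrow> (nat \<Rightarrow> complex) \<Rightarrow> complex" where
  "mpoly_eval p v = (\<Sum>m\<in>Poly_Mapping.keys p. Poly_Mapping.lookup p m * (\<Prod>i\<in>Poly_Mapping.keys m. v i ^ Poly_Mapping.lookup m i))"

definition pt4 :: "complex \<Rightarrow> complex \<Rightarrow> complex \<Rightarrow> complex \<Rightarrow> nat \<Rightarrow> complex" where
  "pt4 x y s t = (\<lambda>i. if i = 0 then x else if i = 1 then y else if i = 2 then s
                       else if i = 3 then t else 0)"

text \<open>Complex zero set of F in C^4, written as pairs of points of C^2
  ((x,y),(s,t)) so that I \<times> J is directly a subset.\<close>
definition zero_set4 :: "mpoly \<Rightarrow> ((complex \<times> complex) \<times> (complex \<times> complex)) set" where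
  "zero_set4 F = {((x, y), (s, t)). mpoly_eval F (pt4 x y s t) = 0}"

definition cartesian :: "mpoly \<Rightarrow> bool" where
  "cartesian F \<longleftrightarrow> (\<exists>G K H L.
      poly_in_vars {0, 1} G \<and> \<not> is_const_mpoly G \<and>
      poly_in_vars {2, 3} K \<and> \<not> is_const_mpoly K \<and>
      poly_in_vars {0, 1, 2, 3} H \<and> poly_in_vars {0, 1, 2, 3} L \<and>
      F = G * H + K * L)"

end

theory Submission
  imports Defs "HOL-Computational_Algebra.Computational_Algebra" "HOL-Computational_Algebra.Field_as_Ring"
begin

lemma map_poly_add_hom:
  assumes "h 0 = 0" "\<And>a b. h (a+b) = h a + h b"
  shows "map_poly h (p + q) = map_poly h p + map_poly h q"
  by (rule poly_eqI) (simp add: coeff_map_poly assms)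

lemma map_poly_mult_hom:
  fixes h :: "'a::comm_semiring_1 \<Rightarrow> 'b::comm_semiring_1"
  assumes h0: "h 0 = 0" and ha: "\<And>a b. h (a+b) = h a + h b" and hm: "\<And>a b. h (a*b) = h a * h b"
  shows "map_poly h (p * q) = map_poly h p * map_poly h q"
proof (induction p)
  case 0 then show ?case by simp
next
  case (pCons a p)
  have "map_poly h (pCons a p * q) = map_poly h (smult a q) + map_poly h (pCons 0 (p * q))"
    by (simp add: map_poly_add_hom[OF h0 ha])
  also have "\<dots> = smult (h a) (map_poly h q) + pCons 0 (map_poly h p * map_poly h q)"
    using pCons.IH by (simp add: map_poly_smult[of h, OF h0 hm] map_poly_pCons h0)
  also have "\<dots> = map_poly h (pCons a p) * map_poly h q"
    by (simp add: map_poly_pCons h0)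
  finally show ?case .
qed

lemma map_poly_sum_hom:
  assumes "h 0 = 0" "\<And>a b. h (a+b) = h a + h b"
  shows "map_poly h (sum f A) = (\<Sum>x\<in>A. map_poly h (f x))"
  by (induction A rule: infinite_finite_induct) (simp_all add: map_poly_add_hom[OF assms])

definition evh :: "('a::zero \<Rightarrow> 'b::comm_semiring_1) \<Rightarrow> 'b \<Rightarrow> 'a poly \<Rightarrow> 'b"
  where "evh h X p = poly (map_poly h p) X"

lemma evh_0[simp]: "evh h X 0 = 0" by (simp add: evh_def)

lemma evh_add:
  assumes "h 0 = 0" "\<And>a b. h (a+b) = h a + h b"
  shows "evh h X (p + q) = evh h X p + evh h X q"
  by (simp add: evh_def map_poly_add_hom[OF assms])

lemma evh_mult:
  fixes h :: "'a::comm_semiring_1 \<Rightarrow> 'b::comm_semiring_1"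
  assumes "h 0 = 0" "\<And>a b. h (a+b) = h a + h b" "\<And>a b. h (a*b) = h a * h b"
  shows "evh h X (p * q) = evh h X p * evh h X q"
  by (simp add: evh_def map_poly_mult_hom[OF assms])

lemma evh_pCons:
  assumes "h 0 = 0"
  shows "evh h X (pCons a p) = h a + X * evh h X p"
  by (simp add: evh_def map_poly_pCons assms)

lemma evh_const: "h 0 = 0 \<Longrightarrow> evh h X [:a:] = h a"
  by (simp add: evh_pCons)

lemma evh_monom: "h 0 = 0 \<Longrightarrow> evh h X (monom a n) = h a * X ^ n"
  by (simp add: evh_def map_poly_monom poly_monom)

lemma evh_one: "h 0 = 0 \<Longrightarrow> h 1 = 1 \<Longrightarrow> evh h X 1 = 1"
  by (simp add: evh_def)

lemma evh_sum:
  assumes "h 0 = 0" "\<And>a b. h (a+b) = h a + h b"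
  shows "evh h X (sum f A) = (\<Sum>x\<in>A. evh h X (f x))"
  by (induction A rule: infinite_finite_induct) (simp_all add: evh_add[OF assms])


definition Xv :: "nat \<Rightarrow> mpoly" where "Xv i = Poly_Mapping.single (Poly_Mapping.single i 1) 1"
definition cst :: "complex \<Rightarrow> mpoly" where "cst c = Poly_Mapping.single 0 c"

definition psi1 :: "complex poly \<Rightarrow> mpoly" where "psi1 = evh cst (Xv 0)"
definition psi2 :: "complex poly poly \<Rightarrow> mpoly" where "psi2 = evh psi1 (Xv 1)"
definition psi3 :: "complex poly poly poly \<Rightarrow> mpoly" where "psi3 = evh psi2 (Xv 2)"
definition psi4 :: "complex poly poly poly poly \<Rightarrow> mpoly" where "psi4 = evh psi3 (Xv 3)"

lemma cst_0[simp]: "cst 0 = 0" by (simp add: cst_def)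
lemma cst_1[simp]: "cst 1 = 1" by (simp add: cst_def)
lemma cst_add: "cst (a+b) = cst a + cst b" by (simp add: cst_def single_add)
lemma cst_mult: "cst (a*b) = cst a * cst b" by (simp add: cst_def mult_single)

lemma psi1_0[simp]: "psi1 0 = 0" by (simp add: psi1_def)
lemma psi1_add: "psi1 (a+b) = psi1 a + psi1 b" by (simp add: psi1_def evh_add cst_add)
lemma psi1_mult: "psi1 (a*b) = psi1 a * psi1 b" by (simp add: psi1_def evh_mult cst_add cst_mult)
lemma psi2_0[simp]: "psi2 0 = 0" by (simp add: psi2_def)
lemma psi2_add: "psi2 (a+b) = psi2 a + psi2 b" by (simp add: psi2_def evh_add psi1_add)
lemma psi2_mult: "psi2 (a*b) = psi2 a * psi2 b" by (simp add: psi2_def evh_mult psi1_add psi1_mult)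
lemma psi3_0[simp]: "psi3 0 = 0" by (simp add: psi3_def)
lemma psi3_add: "psi3 (a+b) = psi3 a + psi3 b" by (simp add: psi3_def evh_add psi2_add)
lemma psi3_mult: "psi3 (a*b) = psi3 a * psi3 b" by (simp add: psi3_def evh_mult psi2_add psi2_mult)
lemma psi4_0[simp]: "psi4 0 = 0" by (simp add: psi4_def)
lemma psi4_add: "psi4 (a+b) = psi4 a + psi4 b" by (simp add: psi4_def evh_add psi3_add)
lemma psi4_mult: "psi4 (a*b) = psi4 a * psi4 b" by (simp add: psi4_def evh_mult psi3_add psi3_mult)
lemma psi4_sum: "psi4 (sum f A) = (\<Sum>x\<in>A. psi4 (f x))"
  by (simp add: psi4_def evh_sum psi3_add)

lemma psi_consts: "psi4 [:[:[:[:c:]:]:]:] = cst c"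
  by (simp add: psi4_def psi3_def psi2_def psi1_def evh_const)

definition mv :: "(nat \<Rightarrow>\<^sub>0 nat) \<Rightarrow> (nat \<Rightarrow> complex) \<Rightarrow> complex" where
  "mv k v = (\<Prod>i\<in>Poly_Mapping.keys k. v i ^ Poly_Mapping.lookup k i)"

lemma mv_superset:
  assumes "finite S" "Poly_Mapping.keys k \<subseteq> S"
  shows "mv k v = (\<Prod>i\<in>S. v i ^ Poly_Mapping.lookup k i)"
  unfolding mv_def
  by (rule prod.mono_neutral_left) (use assms in \<open>auto simp: in_keys_iff\<close>)

lemma keys_add_sub: "Poly_Mapping.keys (a + b) \<subseteq> Poly_Mapping.keys a \<union> Poly_Mapping.keys b"
  by (rule keys_add)

lemma mv_add: "mv (a + b) v = mv a v * mv b v"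
proof -
  let ?S = "Poly_Mapping.keys a \<union> Poly_Mapping.keys b"
  have fS: "finite ?S" by simp
  have "mv (a+b) v = (\<Prod>i\<in>?S. v i ^ Poly_Mapping.lookup (a+b) i)"
    by (rule mv_superset[OF fS keys_add_sub])
  also have "\<dots> = (\<Prod>i\<in>?S. v i ^ Poly_Mapping.lookup a i) * (\<Prod>i\<in>?S. v i ^ Poly_Mapping.lookup b i)"
    by (simp add: lookup_add power_add prod.distrib)
  also have "\<dots> = mv a v * mv b v"
    using mv_superset[OF fS, of a v] mv_superset[OF fS, of b v] by auto
  finally show ?thesis .
qed

lemma mv_single1: "mv (Poly_Mapping.single i 1) v = v i"
  by (simp add: mv_def)
lemma mv_single1'[simp]: "mv (Poly_Mapping.single i (Suc 0)) v = v i"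
  by (simp add: mv_def)

lemma mv_0[simp]: "mv 0 v = 1" by (simp add: mv_def)

lemma eval_superset:
  assumes "finite S" "Poly_Mapping.keys p \<subseteq> S"
  shows "mpoly_eval p v = (\<Sum>m\<in>S. Poly_Mapping.lookup p m * mv m v)"
  unfolding mpoly_eval_def mv_def[symmetric]
  by (rule sum.mono_neutral_left) (use assms in \<open>auto simp: in_keys_iff\<close>)

lemma eval_add: "mpoly_eval (p + q) v = mpoly_eval p v + mpoly_eval q v"
proof -
  let ?S = "Poly_Mapping.keys p \<union> Poly_Mapping.keys q"
  have fS: "finite ?S" by simp
  have "mpoly_eval (p+q) v = (\<Sum>m\<in>?S. Poly_Mapping.lookup (p+q) m * mv m v)"
    by (rule eval_superset[OF fS keys_add_sub])
  also have "\<dots> = (\<Sum>m\<in>?S. Poly_Mapping.lookup p m * mv m v) + (\<Sum>m\<in>?S. Poly_Mapping.lookup q m * mv m v)"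
    by (simp add: lookup_add distrib_right sum.distrib)
  also have "\<dots> = mpoly_eval p v + mpoly_eval q v"
    using eval_superset[OF fS, of p v] eval_superset[OF fS, of q v] by auto
  finally show ?thesis .
qed

lemma eval_0[simp]: "mpoly_eval 0 v = 0" by (simp add: mpoly_eval_def)

lemma eval_sum: "mpoly_eval (sum f A) v = (\<Sum>x\<in>A. mpoly_eval (f x) v)"
  by (induction A rule: infinite_finite_induct) (simp_all add: eval_add)

lemma eval_single: "mpoly_eval (Poly_Mapping.single k c) v = c * mv k v"
  by (simp add: mpoly_eval_def mv_def)

lemma eval_cst: "mpoly_eval (cst c) v = c"
  by (simp add: cst_def eval_single)

lemma mpoly_monoms: "p = (\<Sum>m\<in>Poly_Mapping.keys p. Poly_Mapping.single m (Poly_Mapping.lookup p m))"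
proof (rule poly_mapping_eqI)
  fix k
  show "Poly_Mapping.lookup p k = Poly_Mapping.lookup (\<Sum>m\<in>Poly_Mapping.keys p. Poly_Mapping.single m (Poly_Mapping.lookup p m)) k"
    by (simp add: lookup_sum lookup_single when_def in_keys_iff)
qed

lemma eval_X_mult: "mpoly_eval (Xv i * A) v = v i * mpoly_eval A v"
proof -
  have "Xv i * A = (\<Sum>m\<in>Poly_Mapping.keys A. Xv i * Poly_Mapping.single m (Poly_Mapping.lookup A m))"
    by (subst sum_distrib_left[symmetric], rule arg_cong[where f="\<lambda>z. Xv i * z"], rule mpoly_monoms)
  then have "mpoly_eval (Xv i * A) v = (\<Sum>m\<in>Poly_Mapping.keys A. Poly_Mapping.lookup A m * (v i * mv m v))"
    by (simp add: eval_sum Xv_def mult_single eval_single mv_add mv_single1)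
  also have "\<dots> = v i * mpoly_eval A v"
    unfolding mpoly_eval_def mv_def[symmetric] sum_distrib_left
    by (rule sum.cong) (simp_all add: algebra_simps)
  finally show ?thesis .
qed

lemma eval_evh:
  assumes "h 0 = 0" "\<And>a. mpoly_eval (h a) v = g a" "g 0 = 0"
  shows "mpoly_eval (evh h (Xv i) p) v = evh g (v i) p"
  by (induction p) (simp_all add: evh_pCons assms eval_add eval_X_mult)

definition E1 :: "complex \<Rightarrow> complex poly \<Rightarrow> complex" where "E1 x = (\<lambda>c. poly c x)"
definition E2 :: "complex \<Rightarrow> complex \<Rightarrow> complex poly poly \<Rightarrow> complex" where "E2 x y = evh (E1 x) y"
definition E3 :: "complex \<Rightarrow> complex \<Rightarrow> complex \<Rightarrow> complex poly poly poly \<Rightarrow> complex" where "E3 x y s = evh (E2 x y) s"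
definition E4 :: "complex \<Rightarrow> complex \<Rightarrow> complex \<Rightarrow> complex \<Rightarrow> complex poly poly poly poly \<Rightarrow> complex"
  where "E4 x y s t = evh (E3 x y s) t"

lemma E1_0[simp]: "E1 x 0 = 0" by (simp add: E1_def)
lemma E2_0[simp]: "E2 x y 0 = 0" by (simp add: E2_def)
lemma E3_0[simp]: "E3 x y s 0 = 0" by (simp add: E3_def)
lemma E1_add: "E1 x (a+b) = E1 x a + E1 x b" by (simp add: E1_def)
lemma E1_mult: "E1 x (a*b) = E1 x a * E1 x b" by (simp add: E1_def)
lemma E2_add: "E2 x y (a+b) = E2 x y a + E2 x y b" by (simp add: E2_def evh_add E1_add)
lemma E2_mult: "E2 x y (a*b) = E2 x y a * E2 x y b" by (simp add: E2_def evh_mult E1_add E1_mult)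
lemma E3_add: "E3 x y s (a+b) = E3 x y s a + E3 x y s b" by (simp add: E3_def evh_add E2_add)
lemma E3_mult: "E3 x y s (a*b) = E3 x y s a * E3 x y s b" by (simp add: E3_def evh_mult E2_add E2_mult)
lemma E4_add: "E4 x y s t (a+b) = E4 x y s t a + E4 x y s t b" by (simp add: E4_def evh_add E3_add)
lemma E4_mult: "E4 x y s t (a*b) = E4 x y s t a * E4 x y s t b" by (simp add: E4_def evh_mult E3_add E3_mult)

lemma eval_psi4: "mpoly_eval (psi4 p) (pt4 x y s t) = E4 x y s t p"
proof -
  have 1: "mpoly_eval (psi1 c) (pt4 x y s t) = E1 x c" for c
    unfolding psi1_def E1_def using eval_evh[of cst "pt4 x y s t" "\<lambda>z. z" 0 c]
    by (simp add: eval_cst pt4_def evh_def)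
  have 2: "mpoly_eval (psi2 c) (pt4 x y s t) = E2 x y c" for c
    unfolding psi2_def E2_def using eval_evh[of psi1 "pt4 x y s t" "E1 x" 1 c] 1
    by (simp add: pt4_def)
  have 3: "mpoly_eval (psi3 c) (pt4 x y s t) = E3 x y s c" for c
    unfolding psi3_def E3_def using eval_evh[of psi2 "pt4 x y s t" "E2 x y" 2 c] 2
    by (simp add: pt4_def)
  show ?thesis
    unfolding psi4_def E4_def using eval_evh[of psi3 "pt4 x y s t" "E3 x y s" 3 p] 3
    by (simp add: pt4_def)
qed

lemma piv_0[simp]: "poly_in_vars V 0" by (simp add: poly_in_vars_def)
lemma piv_cst: "poly_in_vars V (cst c)" by (simp add: poly_in_vars_def cst_def)
lemma piv_add: "poly_in_vars V a \<Longrightarrow> poly_in_vars V b \<Longrightarrow> poly_in_vars V (a+b)"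
  unfolding poly_in_vars_def using keys_add_sub[of a b] by blast
lemma piv_X_mult:
  assumes "i \<in> V" "poly_in_vars V A"
  shows "poly_in_vars V (Xv i * A)"
  unfolding poly_in_vars_def
proof
  fix m assume "m \<in> Poly_Mapping.keys (Xv i * A)"
  then obtain a b where ab: "m = a + b" "a \<in> Poly_Mapping.keys (Xv i)" "b \<in> Poly_Mapping.keys A"
    using keys_mult[of "Xv i" A] by blast
  have "Poly_Mapping.keys a \<subseteq> V" using ab(2) assms(1) by (simp add: Xv_def)
  moreover have "Poly_Mapping.keys b \<subseteq> V" using ab(3) assms(2) by (simp add: poly_in_vars_def)
  ultimately show "Poly_Mapping.keys m \<subseteq> V" using ab(1) keys_add_sub[of a b] by blast
qed

lemma piv_evh:
  assumes "h 0 = 0" "\<And>a. poly_in_vars V (h a)" "i \<in> V"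
  shows "poly_in_vars V (evh h (Xv i) p)"
  by (induction p) (simp_all add: evh_pCons assms piv_add piv_X_mult)

lemma piv_psi4: "poly_in_vars {0,1,2,3} (psi4 p)"
  unfolding psi4_def psi3_def psi2_def psi1_def
  by (intro piv_evh piv_cst) (simp_all add: evh_def)

definition Exy :: "complex poly poly \<Rightarrow> complex poly poly poly poly" where "Exy g = [:[:g:]:]"
definition Est :: "complex poly poly \<Rightarrow> complex poly poly poly poly" where
  "Est k = map_poly (map_poly (\<lambda>c. [:[:c:]:])) k"

lemma psi4_Exy: "psi4 (Exy g) = psi2 g"
  by (simp add: psi4_def psi3_def Exy_def evh_const)

lemma piv_psi4_Exy: "poly_in_vars {0,1} (psi4 (Exy g))"
  unfolding psi4_Exy psi2_def psi1_def
  by (intro piv_evh piv_cst) (simp_all add: evh_def)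

lemma psi2_cc: "psi2 [:[:c:]:] = cst c"
  by (simp add: psi2_def psi1_def evh_const)

lemma psi4_Est: "psi4 (Est k) = evh (evh cst (Xv 2)) (Xv 3) k"
proof -
  have a: "psi3 (map_poly (\<lambda>c. [:[:c:]:]) r) = evh cst (Xv 2) r" for r
    unfolding psi3_def evh_def
    by (simp add: map_poly_map_poly o_def psi2_cc)
  show ?thesis unfolding psi4_def Est_def evh_def
    by (simp add: map_poly_map_poly o_def a[unfolded evh_def])
qed

lemma piv_psi4_Est: "poly_in_vars {2,3} (psi4 (Est k))"
  unfolding psi4_Est
  by (intro piv_evh piv_cst) (simp_all add: evh_def)


definition coeff4 :: "complex poly poly poly poly \<Rightarrow> nat \<Rightarrow> nat \<Rightarrow> nat \<Rightarrow> nat \<Rightarrow> complex" where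
  "coeff4 p a b c e = coeff (coeff (coeff (coeff p e) c) b) a"

definition mono4 :: "complex \<Rightarrow> nat \<Rightarrow> nat \<Rightarrow> nat \<Rightarrow> nat \<Rightarrow> complex poly poly poly poly" where
  "mono4 z a b c e = monom (monom (monom (monom z a) b) c) e"

lemma coeff4_mono4: "coeff4 (mono4 z a b c e) a' b' c' e' = (if a=a' \<and> b=b' \<and> c=c' \<and> e=e' then z else 0)"
  by (simp add: coeff4_def mono4_def coeff_monom)

lemma coeff4_sum: "coeff4 (sum f A) a b c e = (\<Sum>x\<in>A. coeff4 (f x) a b c e)"
  by (simp add: coeff4_def coeff_sum)

lemma Xv_pow: "Xv i ^ n = Poly_Mapping.single (Poly_Mapping.single i n) 1"
proof (induction n)
  case 0 then show ?case by simp
next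
  case (Suc n)
  have "Xv i ^ Suc n = Xv i * Xv i ^ n" by simp
  also have "\<dots> = Poly_Mapping.single (Poly_Mapping.single i 1 + Poly_Mapping.single i n) 1"
    by (simp only: Suc.IH) (simp add: Xv_def mult_single)
  also have "Poly_Mapping.single i 1 + Poly_Mapping.single i n = Poly_Mapping.single i (Suc n)"
    by (simp add: single_add[symmetric])
  finally show ?case .
qed

lemma psi4_mono4: "psi4 (mono4 z a b c e) =
   Poly_Mapping.single (Poly_Mapping.single 0 a + Poly_Mapping.single 1 b + Poly_Mapping.single 2 c + Poly_Mapping.single 3 e) z"
proof -
  have "psi4 (mono4 z a b c e) = cst z * Xv 0 ^ a * Xv 1 ^ b * Xv 2 ^ c * Xv 3 ^ e"
    by (simp add: mono4_def psi4_def psi3_def psi2_def psi1_def evh_monom)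
  also have "\<dots> = Poly_Mapping.single (Poly_Mapping.single 0 a + Poly_Mapping.single 1 b + Poly_Mapping.single 2 c + Poly_Mapping.single 3 e) z"
    by (simp add: Xv_pow cst_def mult_single)
  finally show ?thesis .
qed

lemma mon_decomp:
  fixes m :: "nat \<Rightarrow>\<^sub>0 nat"
  assumes "Poly_Mapping.keys m \<subseteq> {0,1,2,3}"
  shows "m = Poly_Mapping.single 0 (Poly_Mapping.lookup m 0) + Poly_Mapping.single 1 (Poly_Mapping.lookup m 1)
           + Poly_Mapping.single 2 (Poly_Mapping.lookup m 2) + Poly_Mapping.single 3 (Poly_Mapping.lookup m 3)"
proof (rule poly_mapping_eqI)
  fix k
  show "Poly_Mapping.lookup m k = Poly_Mapping.lookup (Poly_Mapping.single 0 (Poly_Mapping.lookup m 0) + Poly_Mapping.single 1 (Poly_Mapping.lookup m 1)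
           + Poly_Mapping.single 2 (Poly_Mapping.lookup m 2) + Poly_Mapping.single 3 (Poly_Mapping.lookup m 3)) k"
  proof (cases "k \<in> {0,1,2,3}")
    case True then show ?thesis by (auto simp: lookup_add lookup_single)
  next
    case False
    then have "Poly_Mapping.lookup m k = 0" using assms by (meson in_keys_iff subsetD)
    then show ?thesis using False by (auto simp: lookup_add lookup_single)
  qed
qed

lemma mon_deg_decomp:
  fixes m :: "nat \<Rightarrow>\<^sub>0 nat"
  assumes "Poly_Mapping.keys m \<subseteq> {0,1,2,3}"
  shows "mon_deg m = Poly_Mapping.lookup m 0 + Poly_Mapping.lookup m 1 + Poly_Mapping.lookup m 2 + Poly_Mapping.lookup m 3"
proof -
  have "mon_deg m = (\<Sum>i\<in>{0,1,2,3::nat}. Poly_Mapping.lookup m i)"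
    unfolding mon_deg_def
    by (rule sum.mono_neutral_left) (use assms in \<open>auto simp: in_keys_iff\<close>)
  then show ?thesis by simp
qed

lemma mon_deg_le_total: "m \<in> Poly_Mapping.keys M \<Longrightarrow> mon_deg m \<le> total_degree M"
  unfolding total_degree_def by (rule Max_ge) auto

lemma surj_psi4:
  assumes "poly_in_vars V M" "V \<subseteq> {0,1,2,3}"
  shows "\<exists>p. psi4 p = M \<and> (\<forall>a b c e. coeff4 p a b c e \<noteq> 0 \<longrightarrow> a+b+c+e \<le> total_degree M \<and>
            (0\<notin>V \<longrightarrow> a=0) \<and> (1\<notin>V \<longrightarrow> b=0) \<and> (2\<notin>V \<longrightarrow> c=0) \<and> (3\<notin>V \<longrightarrow> e=0))"
proof -
  have kV: "Poly_Mapping.keys m \<subseteq> V" if "m \<in> Poly_Mapping.keys M" for m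
    using assms(1) that by (simp add: poly_in_vars_def)
  define p where "p = (\<Sum>m\<in>Poly_Mapping.keys M. mono4 (Poly_Mapping.lookup M m) (Poly_Mapping.lookup m 0)
      (Poly_Mapping.lookup m 1) (Poly_Mapping.lookup m 2) (Poly_Mapping.lookup m 3))"
  have "psi4 p = (\<Sum>m\<in>Poly_Mapping.keys M. Poly_Mapping.single m (Poly_Mapping.lookup M m))"
    unfolding p_def psi4_sum
  proof (rule sum.cong[OF refl])
    fix m assume "m \<in> Poly_Mapping.keys M"
    then have "Poly_Mapping.keys m \<subseteq> {0,1,2,3}" using kV assms(2) by blast
    then have d: "Poly_Mapping.single 0 (Poly_Mapping.lookup m 0) + Poly_Mapping.single 1 (Poly_Mapping.lookup m 1)
           + Poly_Mapping.single 2 (Poly_Mapping.lookup m 2) + Poly_Mapping.single 3 (Poly_Mapping.lookup m 3) = m"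
      by (rule mon_decomp[symmetric])
    show "psi4 (mono4 (Poly_Mapping.lookup M m) (Poly_Mapping.lookup m 0) (Poly_Mapping.lookup m 1)
           (Poly_Mapping.lookup m 2) (Poly_Mapping.lookup m 3)) = Poly_Mapping.single m (Poly_Mapping.lookup M m)"
      unfolding psi4_mono4 d by (rule refl)
  qed
  also have "\<dots> = M" by (rule mpoly_monoms[symmetric])
  finally have 1: "psi4 p = M" .
  have 2: "a+b+c+e \<le> total_degree M \<and>
            (0\<notin>V \<longrightarrow> a=0) \<and> (1\<notin>V \<longrightarrow> b=0) \<and> (2\<notin>V \<longrightarrow> c=0) \<and> (3\<notin>V \<longrightarrow> e=0)"
    if nz: "coeff4 p a b c e \<noteq> 0" for a b c e
  proof -
    have "(\<Sum>m\<in>Poly_Mapping.keys M. coeff4 (mono4 (Poly_Mapping.lookup M m) (Poly_Mapping.lookup m 0)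
      (Poly_Mapping.lookup m 1) (Poly_Mapping.lookup m 2) (Poly_Mapping.lookup m 3)) a b c e) \<noteq> 0"
      using nz unfolding p_def coeff4_sum .
    then obtain m where m1: "m \<in> Poly_Mapping.keys M" and
      "coeff4 (mono4 (Poly_Mapping.lookup M m) (Poly_Mapping.lookup m 0)
      (Poly_Mapping.lookup m 1) (Poly_Mapping.lookup m 2) (Poly_Mapping.lookup m 3)) a b c e \<noteq> 0"
      by (rule sum.not_neutral_contains_not_neutral)
    then have m: "Poly_Mapping.lookup m 0 = a" "Poly_Mapping.lookup m 1 = b"
      "Poly_Mapping.lookup m 2 = c" "Poly_Mapping.lookup m 3 = e"
      unfolding coeff4_mono4 by (meson)+
    have km: "Poly_Mapping.keys m \<subseteq> {0,1,2,3}" using kV[OF m1] assms(2) by blast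
    have "a+b+c+e = mon_deg m" using mon_deg_decomp[OF km] m by simp
    also have "\<dots> \<le> total_degree M" by (rule mon_deg_le_total[OF m1])
    finally have t: "a+b+c+e \<le> total_degree M" .
    have z: "Poly_Mapping.lookup m i = 0" if "i \<notin> V" for i
      using kV[OF m1] that by (meson in_keys_iff subsetD)
    show ?thesis using t z m by metis
  qed
  show ?thesis using 1 2 by blast
qed

lemma coeff_zero_from4:
  assumes "\<And>a b c. coeff4 p a b c e = 0"
  shows "coeff p e = 0"
  using assms unfolding coeff4_def by (intro poly_eqI) simp_all

lemma shape_xy:
  assumes "\<And>a b c e. coeff4 p a b c e \<noteq> 0 \<Longrightarrow> c = 0 \<and> e = 0"
  shows "p = Exy (coeff (coeff p 0) 0)"
proof (rule poly_eqI)
  fix e show "coeff p e = coeff (Exy (coeff (coeff p 0) 0)) e"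
  proof (cases "e = 0")
    case True
    show ?thesis
    proof (rule poly_eqI)
      fix c show "coeff (coeff p e) c = coeff (coeff (Exy (coeff (coeff p 0) 0)) e) c"
      proof (cases "c = 0")
        case False
        have "coeff (coeff p e) c = 0"
          using assms False unfolding coeff4_def by (intro poly_eqI) (metis coeff_0)
        then show ?thesis using True False by (simp add: Exy_def coeff_pCons split: nat.splits)
      qed (simp add: True Exy_def)
    qed
  next
    case False
    have "coeff p e = 0" using assms False by (intro coeff_zero_from4) blast
    then show ?thesis using False by (simp add: Exy_def coeff_pCons split: nat.splits)
  qed
qed

lemma shape_st:
  assumes "\<And>a b c e. coeff4 p a b c e \<noteq> 0 \<Longrightarrow> a = 0 \<and> b = 0"
  shows "p = Est (map_poly (map_poly (\<lambda>q. coeff (coeff q 0) 0)) p)"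
proof (rule poly_eqI)+
  fix e c b a
  show "coeff (coeff (coeff (coeff p e) c) b) a = coeff (coeff (coeff (coeff (Est (map_poly (map_poly (\<lambda>q. coeff (coeff q 0) 0)) p)) e) c) b) a"
    using assms[of a b c e] unfolding coeff4_def Est_def
    by (cases "a = 0"; cases "b = 0") (auto simp: coeff_map_poly coeff_pCons split: nat.splits)
qed

lemma eval_const_mpoly:
  assumes "is_const_mpoly M"
  shows "mpoly_eval M v = Poly_Mapping.lookup M 0"
proof -
  have "mpoly_eval M v = (\<Sum>m\<in>{0}. Poly_Mapping.lookup M m * mv m v)"
    by (rule eval_superset) (use assms in \<open>simp_all add: is_const_mpoly_def\<close>)
  then show ?thesis by simp
qed

lemma E4_Exy: "E4 x y s t (Exy g) = E2 x y g"
proof -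
  have "E4 x y s t [:[:g:]:] = E3 x y s [:g:]" unfolding E4_def by (rule evh_const) simp
  also have "E3 x y s [:g:] = E2 x y g" unfolding E3_def by (rule evh_const) simp
  finally show ?thesis by (simp add: Exy_def)
qed

lemma E2_const: "E2 x y [:[:c:]:] = c"
proof -
  have "E2 x y [:[:c:]:] = E1 x [:c:]" unfolding E2_def by (rule evh_const) simp
  also have "\<dots> = c" by (simp add: E1_def)
  finally show ?thesis .
qed

lemma E4_Est: "E4 x y s t (Est k) = E2 s t k"
proof -
  have a: "E3 x y s (map_poly (\<lambda>c. [:[:c:]:]) r) = E1 s r" for r
  proof -
    have "E3 x y s (map_poly (\<lambda>c. [:[:c:]:]) r) = poly (map_poly (E2 x y \<circ> (\<lambda>c. [:[:c:]:])) r) s"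
      unfolding E3_def evh_def by (subst map_poly_map_poly) simp_all
    also have "E2 x y \<circ> (\<lambda>c. [:[:c:]:]) = (\<lambda>c. c)" by (rule ext) (simp add: E2_const)
    finally show ?thesis by (simp add: E1_def)
  qed
  have "E4 x y s t (Est k) = poly (map_poly (E3 x y s \<circ> map_poly (\<lambda>c. [:[:c:]:])) k) t"
    unfolding E4_def evh_def Est_def by (subst map_poly_map_poly) simp_all
  also have "E3 x y s \<circ> map_poly (\<lambda>c. [:[:c:]:]) = E1 s" by (rule ext) (simp add: a)
  finally show ?thesis by (simp add: E2_def evh_def)
qed

lemma E2_zero:
  assumes "\<And>x y. E2 x y f = 0"
  shows "f = 0"
proof -
  have "map_poly (E1 x) f = 0" for x
  proof -
    have "\<forall>y. poly (map_poly (E1 x) f) y = 0" using assms[of x] by (simp add: E2_def evh_def)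
    then show ?thesis using poly_all_0_iff_0 by blast
  qed
  then have "poly (coeff f n) x = 0" for n x
    by (metis coeff_0 coeff_map_poly E1_0 E1_def)
  then have "coeff f n = 0" for n using poly_all_0_iff_0 by blast
  then show ?thesis by (intro poly_eqI) simp
qed

lemma E2_diff: "E2 x y (a - b) = E2 x y a - E2 x y b"
  using E2_add[of x y "a-b" b] by simp

lemma E2_const_poly:
  assumes "\<And>x y. E2 x y g = c"
  shows "g = [:[:c:]:]"
proof -
  have "g - [:[:c:]:] = 0" by (rule E2_zero) (simp add: E2_diff E2_const assms)
  then show ?thesis by simp
qed

lemma nonconst_xy:
  assumes "\<not> (\<exists>c. g = [:[:c:]:])"
  shows "\<not> is_const_mpoly (psi4 (Exy g))"
proof
  assume h: "is_const_mpoly (psi4 (Exy g))"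
  have "E2 x y g = Poly_Mapping.lookup (psi4 (Exy g)) 0" for x y
    using eval_const_mpoly[OF h, of "pt4 x y 0 0"] by (simp add: eval_psi4 E4_Exy)
  then show False using E2_const_poly assms by metis
qed

lemma nonconst_st:
  assumes "\<not> (\<exists>c. k = [:[:c:]:])"
  shows "\<not> is_const_mpoly (psi4 (Est k))"
proof
  assume h: "is_const_mpoly (psi4 (Est k))"
  have "E2 s t k = Poly_Mapping.lookup (psi4 (Est k)) 0" for s t
    using eval_const_mpoly[OF h, of "pt4 0 0 s t"] by (simp add: eval_psi4 E4_Est)
  then show False using E2_const_poly assms by metis
qed

lemma const_is_const: "is_const_mpoly (psi4 (Exy [:[:c:]:]))"
  by (simp add: psi4_Exy psi2_cc cst_def is_const_mpoly_def)

lemma Est_const: "Est [:[:c:]:] = [:[:[:[:c:]:]:]:]"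
  by (simp add: Est_def map_poly_pCons)

lemma const_is_const_st: "is_const_mpoly (psi4 (Est [:[:c:]:]))"
  unfolding Est_const by (simp add: psi_consts cst_def is_const_mpoly_def)


lemma complex_root_exists:
  fixes q :: "complex poly"
  assumes "degree q > 0"
  shows "\<exists>z. poly q z = 0"
  using fundamental_theorem_of_algebra constant_degree assms by (metis neq0_conv)

lemma degree_map_poly_le': "f 0 = 0 \<Longrightarrow> degree (map_poly f p) \<le> degree p"
  by (rule degree_le) (simp add: coeff_map_poly coeff_eq_0)

lemma E2_alt: "E2 x y g = poly (map_poly (\<lambda>c. poly c x) g) y"
  by (simp add: E2_def evh_def E1_def)

lemma zeros_infinite:
  fixes g :: "complex poly poly"
  assumes "\<not> (\<exists>c. g = [:[:c:]:])"
  shows "infinite {(x, y). E2 x y g = 0}"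
proof (cases "degree g = 0")
  case True
  then obtain q where g: "g = [:q:]" by (metis degree_eq_zeroE)
  have "degree q > 0"
  proof (rule ccontr)
    assume "\<not> degree q > 0"
    then obtain c where "q = [:c:]" by (metis degree_eq_zeroE neq0_conv)
    then show False using assms g by blast
  qed
  then obtain x0 where x0: "poly q x0 = 0" using complex_root_exists by blast
  have "range (\<lambda>y. (x0, y)) \<subseteq> {(x, y). E2 x y g = 0}"
    using x0 by (auto simp: E2_alt g map_poly_pCons)
  moreover have "infinite (range (\<lambda>y::complex. (x0, y)))"
    using infinite_UNIV_char_0[where 'a=complex]
    by (metis (mono_tags, lifting) finite_imageD inj_onI prod.inject)
  ultimately show ?thesis using finite_subset by blast
next
  case False
  let ?lc = "lead_coeff g"
  have lc0: "?lc \<noteq> 0" using False by auto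
  have fin: "finite {x. poly ?lc x = 0}" by (rule poly_roots_finite[OF lc0])
  let ?A = "{x. poly ?lc x \<noteq> 0}"
  have infA: "infinite ?A"
  proof
    assume "finite ?A"
    then have "finite (?A \<union> {x. poly ?lc x = 0})" using fin by blast
    moreover have "?A \<union> {x. poly ?lc x = 0} = UNIV" by blast
    ultimately show False using infinite_UNIV_char_0[where 'a=complex] by simp
  qed
  have "\<exists>y. E2 x y g = 0" if "x \<in> ?A" for x
  proof -
    have "degree (map_poly (\<lambda>c. poly c x) g) = degree g"
      using that by (intro antisym degree_map_poly_le' le_degree) (simp_all add: coeff_map_poly)
    then show ?thesis using False complex_root_exists by (auto simp: E2_alt)
  qed
  then obtain Y where Y: "\<And>x. x \<in> ?A \<Longrightarrow> E2 x (Y x) g = 0" by metis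
  have "(\<lambda>x. (x, Y x)) ` ?A \<subseteq> {(x, y). E2 x y g = 0}" using Y by auto
  moreover have "infinite ((\<lambda>x. (x, Y x)) ` ?A)"
    using infA by (simp add: finite_image_iff inj_on_def)
  ultimately show ?thesis using finite_subset by blast
qed

lemma preimage_xy:
  assumes "poly_in_vars {0,1} G"
  shows "\<exists>g. psi4 (Exy g) = G"
proof -
  have V: "{0,1} \<subseteq> {0,1,2,3::nat}" by auto
  obtain p where p1: "psi4 p = G" and p2: "\<forall>a b c e. coeff4 p a b c e \<noteq> 0 \<longrightarrow> a+b+c+e \<le> total_degree G \<and>
            (0\<notin>{0,1::nat} \<longrightarrow> a=0) \<and> (1\<notin>{0,1::nat} \<longrightarrow> b=0) \<and> (2\<notin>{0,1::nat} \<longrightarrow> c=0) \<and> (3\<notin>{0,1::nat} \<longrightarrow> e=0)"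
    using surj_psi4[OF assms V] by (elim exE conjE) blast
  have "c = 0 \<and> e = 0" if "coeff4 p a b c e \<noteq> 0" for a b c e
    using p2[rule_format, OF that] by simp
  then have "p = Exy (coeff (coeff p 0) 0)" by (rule shape_xy)
  then show ?thesis using p1 by (intro exI[of _ "coeff (coeff p 0) 0"]) simp
qed

lemma preimage_st:
  assumes "poly_in_vars {2,3} K"
  shows "\<exists>k. psi4 (Est k) = K"
proof -
  have V: "{2,3} \<subseteq> {0,1,2,3::nat}" by auto
  obtain p where p1: "psi4 p = K" and p2: "\<forall>a b c e. coeff4 p a b c e \<noteq> 0 \<longrightarrow> a+b+c+e \<le> total_degree K \<and>
            (0\<notin>{2,3::nat} \<longrightarrow> a=0) \<and> (1\<notin>{2,3::nat} \<longrightarrow> b=0) \<and> (2\<notin>{2,3::nat} \<longrightarrow> c=0) \<and> (3\<notin>{2,3::nat} \<longrightarrow> e=0)"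
    using surj_psi4[OF assms V] by (elim exE conjE) blast
  have "a = 0 \<and> b = 0" if "coeff4 p a b c e \<noteq> 0" for a b c e
    using p2[rule_format, OF that] by simp
  then have "p = Est (map_poly (map_poly (\<lambda>q. coeff (coeff q 0) 0)) p)" by (rule shape_st)
  then show ?thesis using p1 by (intro exI[of _ "map_poly (map_poly (\<lambda>q. coeff (coeff q 0) 0)) p"]) simp
qed

lemma preimage_all:
  assumes "poly_in_vars {0,1,2,3} H"
  shows "\<exists>h. psi4 h = H"
proof -
  have V: "{0,1,2,3} \<subseteq> {0,1,2,3::nat}" by auto
  show ?thesis using surj_psi4[OF assms V] by (elim exE conjE) blast
qed

lemma forward:
  assumes "cartesian F"
  shows "\<exists>I J :: (complex \<times> complex) set. infinite I \<and> infinite J \<and> I \<times> J \<subseteq> zero_set4 F"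
proof -
  obtain G K H L where GK: "poly_in_vars {0, 1} G" "\<not> is_const_mpoly G"
      "poly_in_vars {2, 3} K" "\<not> is_const_mpoly K"
      "poly_in_vars {0, 1, 2, 3} H" "poly_in_vars {0, 1, 2, 3} L" "F = G * H + K * L"
    using assms unfolding cartesian_def by blast
  obtain g where g: "psi4 (Exy g) = G" using preimage_xy[OF GK(1)] by blast
  obtain k where k: "psi4 (Est k) = K" using preimage_st[OF GK(3)] by blast
  obtain h where h: "psi4 h = H" using preimage_all[OF GK(5)] by blast
  obtain l where l: "psi4 l = L" using preimage_all[OF GK(6)] by blast
  have gnc: "\<not> (\<exists>c. g = [:[:c:]:])" using GK(2) g const_is_const by blast
  have knc: "\<not> (\<exists>c. k = [:[:c:]:])" using GK(4) k const_is_const_st by blast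
  have F: "F = psi4 (Exy g * h + Est k * l)"
    by (simp add: psi4_add psi4_mult g k h l GK(7))
  let ?I = "{(x, y). E2 x y g = 0}" and ?J = "{(s, t). E2 s t k = 0}"
  have "?I \<times> ?J \<subseteq> zero_set4 F"
    by (auto simp: zero_set4_def F eval_psi4 E4_add E4_mult E4_Exy E4_Est)
  then show ?thesis using zeros_infinite[OF gnc] zeros_infinite[OF knc] by blast
qed


type_synonym P2 = "complex poly poly"

definition coeff2 :: "P2 \<Rightarrow> nat \<Rightarrow> nat \<Rightarrow> complex" where
  "coeff2 f a b = coeff (coeff f b) a"

definition mono2 :: "nat \<Rightarrow> nat \<Rightarrow> P2" where
  "mono2 a b = monom (monom 1 a) b"

definition sc :: "complex \<Rightarrow> P2 \<Rightarrow> P2" where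
  "sc c p = smult [:c:] p"

lemma sc_conv: "sc c p = [:[:c:]:] * p" by (simp add: sc_def)

lemma coeff2_mono2: "coeff2 (mono2 a b) a' b' = (if a = a' \<and> b = b' then 1 else 0)"
  by (simp add: coeff2_def mono2_def coeff_monom)

lemma coeff2_add: "coeff2 (f + g) a b = coeff2 f a b + coeff2 g a b"
  by (simp add: coeff2_def)
lemma coeff2_sc: "coeff2 (sc c f) a b = c * coeff2 f a b"
  by (simp add: coeff2_def sc_def)
lemma coeff2_sum: "coeff2 (sum f A) a b = (\<Sum>x\<in>A. coeff2 (f x) a b)"
  by (simp add: coeff2_def coeff_sum)
lemma coeff2_0[simp]: "coeff2 0 a b = 0" by (simp add: coeff2_def)
lemma coeff2_minus: "coeff2 (f - g) a b = coeff2 f a b - coeff2 g a b"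
  by (simp add: coeff2_def)

lemma poly2_eqI: "(\<And>a b. coeff2 f a b = coeff2 g a b) \<Longrightarrow> f = g"
  unfolding coeff2_def by (intro poly_eqI) simp

text \<open>the substitution x := z, y := z u\<close>

definition Cz :: "complex \<Rightarrow> complex poly poly" where "Cz c = [:[:c:]:]"
definition Phix :: "complex poly \<Rightarrow> complex poly poly" where "Phix = evh Cz [:0,1:]"
definition Phi :: "P2 \<Rightarrow> complex poly poly" where "Phi = evh Phix [:0, [:0,1:]:]"

lemma Cz_0[simp]: "Cz 0 = 0" by (simp add: Cz_def)
lemma Cz_add: "Cz (a+b) = Cz a + Cz b" by (simp add: Cz_def)
lemma Cz_mult: "Cz (a*b) = Cz a * Cz b" by (simp add: Cz_def)
lemma Phix_0[simp]: "Phix 0 = 0" by (simp add: Phix_def)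
lemma Phix_add: "Phix (a+b) = Phix a + Phix b" by (simp add: Phix_def evh_add Cz_add)
lemma Phix_mult: "Phix (a*b) = Phix a * Phix b" by (simp add: Phix_def evh_mult Cz_add Cz_mult)
lemma Phi_0[simp]: "Phi 0 = 0" by (simp add: Phi_def)
lemma Phi_add: "Phi (a+b) = Phi a + Phi b" by (simp add: Phi_def evh_add Phix_add)
lemma Phi_mult: "Phi (a*b) = Phi a * Phi b" by (simp add: Phi_def evh_mult Phix_add Phix_mult)

lemma coeff_Phix: "coeff (Phix q) k = [:coeff q k:]"
proof (induction q arbitrary: k)
  case 0 then show ?case by simp
next
  case (pCons a q)
  have "Phix (pCons a q) = Cz a + [:0,1:] * Phix q"
    unfolding Phix_def by (rule evh_pCons) simp
  then show ?case using pCons.IH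
    by (cases k) (simp_all add: Cz_def)
qed

lemma coeff_Phi: "coeff (coeff (Phi f) k) b = (if b \<le> k then coeff2 f (k - b) b else 0)"
proof (induction f arbitrary: k b)
  case 0 then show ?case by (simp add: coeff2_def)
next
  case (pCons q f)
  have e: "Phi (pCons q f) = Phix q + [:0, [:0,1:]:] * Phi f"
    unfolding Phi_def by (rule evh_pCons) simp
  show ?case
  proof (cases k)
    case 0 then show ?thesis
      by (cases b) (simp_all add: e coeff_Phix coeff2_def)
  next
    case (Suc j)
    then show ?thesis using pCons.IH[of j]
      by (cases b) (simp_all add: e coeff_Phix coeff2_def coeff_pCons split: nat.splits)
  qed
qed

lemma coeff2_via_Phi: "coeff2 f a b = coeff (coeff (Phi f) (a + b)) b"
  by (simp add: coeff_Phi)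

definition tdeg :: "P2 \<Rightarrow> nat" where "tdeg f = degree (Phi f)"

definition deg_le :: "nat \<Rightarrow> P2 \<Rightarrow> bool" where
  "deg_le N f \<longleftrightarrow> (\<forall>a b. coeff2 f a b \<noteq> 0 \<longrightarrow> a + b \<le> N)"

lemma tdeg_ge: "coeff2 f a b \<noteq> 0 \<Longrightarrow> a + b \<le> tdeg f"
  unfolding tdeg_def coeff2_via_Phi by (metis coeff_0 le_degree)

lemma tdeg_le: "deg_le N f \<Longrightarrow> tdeg f \<le> N"
  unfolding tdeg_def deg_le_def
proof (rule degree_le, intro allI impI)
  fix k assume h: "\<forall>a b. coeff2 f a b \<noteq> 0 \<longrightarrow> a + b \<le> N" and k: "N < k"
  show "coeff (Phi f) k = 0"
  proof (rule poly_eqI)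
    fix b
    have "coeff2 f (k - b) b = 0" if "b \<le> k"
    proof (rule ccontr)
      assume "coeff2 f (k - b) b \<noteq> 0"
      then have "k - b + b \<le> N" using h by blast
      then show False using k that by simp
    qed
    then show "coeff (coeff (Phi f) k) b = coeff 0 b" by (simp add: coeff_Phi)
  qed
qed

lemma deg_le_iff: "deg_le N f \<longleftrightarrow> tdeg f \<le> N"
  using tdeg_le tdeg_ge unfolding deg_le_def by (meson order_trans)

lemma Phi_eq_0: "Phi f = 0 \<longleftrightarrow> f = 0"
proof
  assume h: "Phi f = 0"
  show "f = 0" by (rule poly2_eqI) (simp add: coeff2_via_Phi h)
qed simp

lemma tdeg_mult: "f \<noteq> 0 \<Longrightarrow> g \<noteq> 0 \<Longrightarrow> tdeg (f * g) = tdeg f + tdeg g"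
  unfolding tdeg_def Phi_mult by (rule degree_mult_eq) (simp_all add: Phi_eq_0)

definition lmy :: "P2 \<Rightarrow> nat" where "lmy f = degree (lead_coeff (Phi f))"
definition lm :: "P2 \<Rightarrow> nat \<times> nat" where "lm f = (tdeg f - lmy f, lmy f)"

lemma lm_coeff:
  assumes "f \<noteq> 0"
  shows "lmy f \<le> tdeg f" "coeff2 f (fst (lm f)) (snd (lm f)) \<noteq> 0"
proof -
  have "lead_coeff (Phi f) \<noteq> 0" using assms by (simp add: Phi_eq_0)
  then have nz: "coeff (lead_coeff (Phi f)) (lmy f) \<noteq> 0" by (simp add: lmy_def)
  then have "lmy f \<le> tdeg f" by (metis coeff_Phi tdeg_def)
  then show "lmy f \<le> tdeg f" .
  show "coeff2 f (fst (lm f)) (snd (lm f)) \<noteq> 0"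
    using nz \<open>lmy f \<le> tdeg f\<close> by (simp add: lm_def coeff_Phi tdeg_def)
qed

lemma lmy_mult:
  assumes "f \<noteq> 0" "g \<noteq> 0"
  shows "lmy (f * g) = lmy f + lmy g"
proof -
  have "lead_coeff (Phi f) \<noteq> 0" "lead_coeff (Phi g) \<noteq> 0" using assms by (simp_all add: Phi_eq_0)
  then show ?thesis
    unfolding lmy_def Phi_mult lead_coeff_mult by (rule degree_mult_eq)
qed

lemma lm_mult:
  assumes "f \<noteq> 0" "g \<noteq> 0"
  shows "lm (f * g) = (fst (lm f) + fst (lm g), snd (lm f) + snd (lm g))"
  using lmy_mult[OF assms] tdeg_mult[OF assms] lm_coeff(1)[OF assms(1)] lm_coeff(1)[OF assms(2)]
  by (simp add: lm_def)

lemma lm_sum: "f \<noteq> 0 \<Longrightarrow> fst (lm f) + snd (lm f) = tdeg f"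
  using lm_coeff(1) by (simp add: lm_def)

lemma tdeg_mono2: "tdeg (mono2 a b) = a + b"
proof (rule antisym)
  show "tdeg (mono2 a b) \<le> a + b" by (rule tdeg_le) (simp add: deg_le_def coeff2_mono2)
  show "a + b \<le> tdeg (mono2 a b)" by (rule tdeg_ge) (simp add: coeff2_mono2)
qed

lemma deg_le_add: "deg_le N f \<Longrightarrow> deg_le N g \<Longrightarrow> deg_le N (f + g)"
  unfolding deg_le_def coeff2_add by (metis add.right_neutral add_0)
lemma deg_le_sc: "deg_le N f \<Longrightarrow> deg_le N (sc c f)"
  unfolding deg_le_def coeff2_sc by simp
lemma deg_le_0[simp]: "deg_le N 0" by (simp add: deg_le_def)
lemma deg_le_sum: "(\<And>x. x \<in> A \<Longrightarrow> deg_le N (f x)) \<Longrightarrow> deg_le N (sum f A)"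
  by (induction A rule: infinite_finite_induct) (simp_all add: deg_le_add)
lemma deg_le_mono: "deg_le N f \<Longrightarrow> N \<le> M \<Longrightarrow> deg_le M f"
  unfolding deg_le_def by (meson order_trans)
lemma tdeg_0[simp]: "tdeg 0 = 0" by (simp add: tdeg_def)
lemma deg_le_mult: "deg_le m f \<Longrightarrow> deg_le n g \<Longrightarrow> deg_le (m + n) (f * g)"
  unfolding deg_le_iff by (cases "f = 0 \<or> g = 0") (auto simp: tdeg_mult)
lemma deg_le_prod:
  assumes "finite A" "\<And>x. x \<in> A \<Longrightarrow> deg_le 1 (f x)"
  shows "deg_le (card A) (prod f A)"
  using assms
proof (induction A rule: finite_induct)
  case empty then show ?case by (simp add: deg_le_def coeff2_def coeff_pCons split: nat.splits)
next
  case (insert x A)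
  then show ?case using deg_le_mult[of 1 "f x" "card A" "prod f A"] by simp
qed

lemma E2_sc: "E2 x y (sc c p) = c * E2 x y p"
  by (simp only: sc_conv E2_mult E2_const)
lemma E2_sum: "E2 x y (sum f A) = (\<Sum>i\<in>A. E2 x y (f i))"
  by (induction A rule: infinite_finite_induct) (simp_all add: E2_add)
lemma E2_prod: "E2 x y (prod f A) = (\<Prod>i\<in>A. E2 x y (f i))"
proof (induction A rule: infinite_finite_induct)
  case (infinite A) then show ?case using E2_const[of x y 1] by (simp add: one_pCons)
next
  case empty then show ?case using E2_const[of x y 1] by (simp add: one_pCons)
next
  case (insert a A) then show ?case by (simp add: E2_mult)
qed
lemma E2_mono2: "E2 x y (mono2 a b) = x ^ a * y ^ b"
  by (simp add: mono2_def E2_def evh_monom E1_def poly_monom)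
lemma E2_linx: "E2 x y [:[:-w, 1:]:] = x - w"
  by (simp add: E2_const[symmetric] E2_def E1_def evh_const)
lemma E2_liny: "E2 x y [:[:-w:], 1:] = y - w"
  by (simp add: E2_def E1_def evh_pCons)
lemma deg_le_linx: "deg_le 1 [:[:-w, 1:]:]"
  by (simp add: deg_le_def coeff2_def coeff_pCons split: nat.splits)
lemma deg_le_liny: "deg_le 1 [:[:-w:], 1:]"
  by (simp add: deg_le_def coeff2_def coeff_pCons split: nat.splits)

lemma poly_expand:
  assumes "deg_le N f"
  shows "f = (\<Sum>m\<in>{m. fst m + snd m \<le> N}. sc (coeff2 f (fst m) (snd m)) (mono2 (fst m) (snd m)))"
proof (rule poly2_eqI)
  fix a b
  have fin: "finite {m::nat\<times>nat. fst m + snd m \<le> N}"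
    by (rule finite_subset[of _ "{0..N} \<times> {0..N}"]) auto
  have "coeff2 (\<Sum>m\<in>{m. fst m + snd m \<le> N}. sc (coeff2 f (fst m) (snd m)) (mono2 (fst m) (snd m))) a b
      = (\<Sum>m\<in>{m. fst m + snd m \<le> N}. if m = (a, b) then coeff2 f a b else 0)"
    unfolding coeff2_sum by (rule sum.cong) (auto simp: coeff2_sc coeff2_mono2)
  also have "\<dots> = (if a + b \<le> N then coeff2 f a b else 0)"
    using fin by (simp add: sum.delta')
  also have "\<dots> = coeff2 f a b" using assms by (auto simp: deg_le_def)
  finally show "coeff2 f a b = coeff2 (\<Sum>m\<in>{m. fst m + snd m \<le> N}. sc (coeff2 f (fst m) (snd m)) (mono2 (fst m) (snd m))) a b" by simp
qed


definition Mk :: "nat \<Rightarrow> (nat \<times> nat) set" where "Mk k = {m. fst m + snd m \<le> k}"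

lemma finite_Mk[simp]: "finite (Mk k)"
  unfolding Mk_def by (rule finite_subset[of _ "{0..k} \<times> {0..k}"]) auto

lemma card_Mk: "2 * card (Mk k) = (k + 1) * (k + 2)"
proof (induction k)
  case 0
  have "Mk 0 = {(0,0)}" by (auto simp: Mk_def)
  then show ?case by simp
next
  case (Suc k)
  let ?D = "{m. fst m + snd m = Suc k}"
  have split: "Mk (Suc k) = Mk k \<union> ?D" by (auto simp: Mk_def)
  have disj: "Mk k \<inter> ?D = {}" by (auto simp: Mk_def)
  have D: "?D = (\<lambda>i. (i, Suc k - i)) ` {0..Suc k}" by (auto simp: image_iff)
  have "card ?D = Suc (Suc k)" unfolding D
    by (subst card_image) (auto simp: inj_on_def)
  moreover have "finite ?D" unfolding D by simp
  ultimately have "card (Mk (Suc k)) = card (Mk k) + Suc (Suc k)"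
    unfolding split using disj by (simp add: card_Un_disjoint)
  then show ?case using Suc by (simp add: algebra_simps)
qed

lemma count_identity:
  assumes "d1 + d2 \<le> N"
  shows "card (Mk N) + card (Mk (N - d1 - d2)) = card (Mk (N - d1)) + card (Mk (N - d2)) + d1 * d2"
proof -
  obtain r where N: "N = d1 + d2 + r" using assms le_Suc_ex by blast
  have "2 * (card (Mk N) + card (Mk (N - d1 - d2))) = 2 * (card (Mk (N - d1)) + card (Mk (N - d2)) + d1 * d2)"
    unfolding add_mult_distrib2 card_Mk N by (simp add: algebra_simps)
  then show ?thesis by simp
qed

lemma sc_add_left: "sc (a + b) x = sc a x + sc b x"
proof -
  have "[:a + b:] = [:a:] + [:b:]" by simp
  then show ?thesis unfolding sc_def by (simp only: smult_add_left)
qed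

lemma sc_one: "sc 1 x = x"
proof -
  have e: "[:1:] = (1 :: complex poly)" by (simp add: one_pCons)
  show ?thesis unfolding sc_def e by (rule smult_1_left)
qed

interpretation scv: vector_space sc
  by unfold_locales (simp_all add: sc_def smult_add_right sc_add_left[unfolded sc_def] sc_one[unfolded sc_def] mult.commute)

lemma coeff2_sum_mono:
  assumes "finite S"
  shows "coeff2 (\<Sum>m\<in>S. sc (c m) (mono2 (fst m) (snd m))) i j = (if (i, j) \<in> S then c (i, j) else 0)"
proof -
  have "coeff2 (\<Sum>m\<in>S. sc (c m) (mono2 (fst m) (snd m))) i j = (\<Sum>m\<in>S. if m = (i, j) then c (i, j) else 0)"
    unfolding coeff2_sum by (rule sum.cong) (auto simp: coeff2_sc coeff2_mono2)
  also have "\<dots> = (if (i, j) \<in> S then c (i, j) else 0)" using assms by (simp add: sum.delta')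
  finally show ?thesis .
qed

lemma sc_0_left[simp]: "sc 0 x = 0" by (simp add: sc_def)
lemma sc_minus_one: "sc (-1) x = - x"
  using scv.scale_minus_left[of 1 x] by (simp add: sc_one)

definition lin :: "complex \<times> complex \<Rightarrow> complex \<times> complex \<Rightarrow> P2" where
  "lin z w = (if fst w \<noteq> fst z then [:[:- fst w, 1:]:] else [:[:- snd w:], 1:])"
definition Lag :: "(complex \<times> complex) set \<Rightarrow> complex \<times> complex \<Rightarrow> P2" where
  "Lag Z z = prod (lin z) (Z - {z})"

lemma E2_lin: "E2 x y (lin z w) = (if fst w \<noteq> fst z then x - fst w else y - snd w)"
  by (simp add: lin_def E2_linx E2_liny)

lemma Lag_zero:
  assumes "finite Z" "z' \<in> Z" "z' \<noteq> z"
  shows "E2 (fst z') (snd z') (Lag Z z) = 0"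
proof -
  have "E2 (fst z') (snd z') (lin z z') = 0" by (simp add: E2_lin)
  then show ?thesis unfolding Lag_def E2_prod using assms by (intro prod_zero) auto
qed

lemma Lag_nonzero:
  assumes "finite Z"
  shows "E2 (fst z) (snd z) (Lag Z z) \<noteq> 0"
  unfolding Lag_def E2_prod E2_lin using assms
  by (auto simp: prod_zero_iff prod_eq_iff)

lemma deg_Lag: "finite Z \<Longrightarrow> deg_le (card Z) (Lag Z z)"
proof -
  assume fin: "finite Z"
  have "deg_le (card (Z - {z})) (Lag Z z)"
    unfolding Lag_def using fin deg_le_linx deg_le_liny by (intro deg_le_prod) (auto simp: lin_def)
  moreover have "card (Z - {z}) \<le> card Z" using fin by (simp add: card_mono)
  ultimately show ?thesis by (rule deg_le_mono)
qed


lemma bezout: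
  fixes f h :: P2 and Z :: "(complex \<times> complex) set"
  assumes f0: "f \<noteq> 0" and h0: "h \<noteq> 0" and cop: "coprime f h" and finZ: "finite Z"
    and zf: "\<And>z. z \<in> Z \<Longrightarrow> E2 (fst z) (snd z) f = 0"
    and zh: "\<And>z. z \<in> Z \<Longrightarrow> E2 (fst z) (snd z) h = 0"
  shows "card Z \<le> tdeg f * tdeg h"
proof -
  define d1 where "d1 = tdeg f"
  define d2 where "d2 = tdeg h"
  define N where "N = d1 + d2 + card Z"
  define L where "L = lm f"
  define Tr where "Tr = (\<lambda>m. (fst m + fst L, snd m + snd L)) ` Mk (N - d1 - d2)"
  define A where "A = Mk (N - d1)"
  define B where "B = Mk (N - d2) - Tr"
  define mo where "mo = (\<lambda>m::nat\<times>nat. mono2 (fst m) (snd m))"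
  define vec where "vec = case_sum (\<lambda>m. f * mo m) (case_sum (\<lambda>m. h * mo m) (Lag Z))"
  define T where "T = A <+> (B <+> Z)"
  have finA: "finite A" and finB: "finite B" unfolding A_def B_def by simp_all
  have finT: "finite T" unfolding T_def using finA finB finZ by simp
  have Lsum: "fst L + snd L = d1" unfolding L_def d1_def by (rule lm_sum[OF f0])
  have TrM: "Tr \<subseteq> Mk (N - d2)" unfolding Tr_def Mk_def using Lsum N_def by auto
  have cardTr: "card Tr = card (Mk (N - d1 - d2))"
    unfolding Tr_def by (rule card_image) (auto simp: inj_on_def)
  have cardB: "card B = card (Mk (N - d2)) - card (Mk (N - d1 - d2))"
    unfolding B_def using TrM cardTr by (simp add: card_Diff_subset finite_subset)
  have cardTrle: "card (Mk (N - d1 - d2)) \<le> card (Mk (N - d2))"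
    using TrM cardTr by (metis card_mono finite_Mk)
  have key: "\<forall>t\<in>T. u t = 0" if sum0: "(\<Sum>t\<in>T. sc (u t) (vec t)) = 0" for u
  proof -
    define a where "a = (\<Sum>m\<in>A. sc (u (Inl m)) (mo m))"
    define b where "b = (\<Sum>m\<in>B. sc (u (Inr (Inl m))) (mo m))"
    define c where "c = (\<Sum>z\<in>Z. sc (u (Inr (Inr z))) (Lag Z z))"
    have sA: "(\<Sum>m\<in>A. sc (u (Inl m)) (f * mo m)) = f * a"
      unfolding a_def sum_distrib_left by (rule sum.cong) (simp_all add: sc_conv mult_ac)
    have sB: "(\<Sum>m\<in>B. sc (u (Inr (Inl m))) (h * mo m)) = h * b"
      unfolding b_def sum_distrib_left by (rule sum.cong) (simp_all add: sc_conv mult_ac)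
    have "(\<Sum>t\<in>T. sc (u t) (vec t)) = (\<Sum>m\<in>A. sc (u (Inl m)) (f * mo m)) +
        ((\<Sum>m\<in>B. sc (u (Inr (Inl m))) (h * mo m)) + c)"
      unfolding T_def c_def using finA finB finZ
      by (simp add: sum.Plus vec_def o_def)
    then have eq0: "f * a + h * b + c = 0" using sum0 sA sB by (simp add: add.assoc)
    have uz: "u (Inr (Inr z)) = 0" if z: "z \<in> Z" for z
    proof -
      have "E2 (fst z) (snd z) (f * a + h * b + c) = 0" using eq0 by simp
      then have Ec: "E2 (fst z) (snd z) c = 0" using zf[OF z] zh[OF z] by (simp add: E2_add E2_mult)
      have "E2 (fst z) (snd z) c = (\<Sum>z'\<in>Z. u (Inr (Inr z')) * E2 (fst z) (snd z) (Lag Z z'))"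
        unfolding c_def E2_sum by (simp add: E2_sc)
      also have "\<dots> = u (Inr (Inr z)) * E2 (fst z) (snd z) (Lag Z z) +
          (\<Sum>z'\<in>Z - {z}. u (Inr (Inr z')) * E2 (fst z) (snd z) (Lag Z z'))"
        by (rule sum.remove[OF finZ z])
      also have "(\<Sum>z'\<in>Z - {z}. u (Inr (Inr z')) * E2 (fst z) (snd z) (Lag Z z')) = 0"
        by (rule sum.neutral) (use Lag_zero[OF finZ z] in auto)
      finally show ?thesis using Ec Lag_nonzero[OF finZ, of z] by simp
    qed
    have c0: "c = 0" unfolding c_def using uz by simp
    have "h * b = f * (- a)" using eq0 c0 by (simp add: algebra_simps add_eq_0_iff2)
    then have "f dvd h * b" by (metis dvdI)
    then have "f dvd b" using coprime_dvd_mult_right_iff[OF cop] by blast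
    then obtain g where bg: "b = f * g" by (elim dvdE)
    have coeffb: "coeff2 b i j = (if (i, j) \<in> B then u (Inr (Inl (i, j))) else 0)" for i j
      unfolding b_def mo_def by (rule coeff2_sum_mono[OF finB])
    have b0: "b = 0"
    proof (rule ccontr)
      assume bn: "b \<noteq> 0"
      then have g0: "g \<noteq> 0" using bg by auto
      have "coeff2 b (fst (lm b)) (snd (lm b)) \<noteq> 0" by (rule lm_coeff(2)[OF bn])
      then have lmB: "(fst (lm b), snd (lm b)) \<in> B" using coeffb by (metis)
      have "deg_le (N - d2) b"
        unfolding deg_le_def using coeffb B_def Mk_def by (auto split: if_splits)
      then have "tdeg b \<le> N - d2" by (rule tdeg_le)
      moreover have "tdeg b = d1 + tdeg g" unfolding bg d1_def by (rule tdeg_mult[OF f0 g0])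
      ultimately have "tdeg g \<le> N - d1 - d2" by simp
      then have "lm g \<in> Mk (N - d1 - d2)" using lm_sum[OF g0] by (simp add: Mk_def)
      moreover have "lm b = (fst (lm g) + fst L, snd (lm g) + snd L)"
        unfolding bg L_def lm_mult[OF f0 g0] by simp
      ultimately have "(fst (lm b), snd (lm b)) \<in> Tr" unfolding Tr_def by force
      then show False using lmB B_def by blast
    qed
    have ub: "u (Inr (Inl m)) = 0" if "m \<in> B" for m
      using coeffb[of "fst m" "snd m"] b0 that by simp
    have "f * a = 0" using eq0 c0 b0 by simp
    then have a0: "a = 0" using f0 by simp
    have ua: "u (Inl m) = 0" if "m \<in> A" for m
      using coeff2_sum_mono[OF finA, of "\<lambda>m. u (Inl m)" "fst m" "snd m"] a0 that
      by (simp add: a_def mo_def)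
    show ?thesis
    proof
      fix t assume "t \<in> T"
      then show "u t = 0" unfolding T_def using ua ub uz by (auto simp: Plus_def)
    qed
  qed
  have inj: "inj_on vec T"
  proof (rule inj_onI, rule ccontr)
    fix t1 t2 assume t: "t1 \<in> T" "t2 \<in> T" "vec t1 = vec t2" "t1 \<noteq> t2"
    define u where "u t = (if t = t1 then 1 else if t = t2 then -1 else (0::complex))" for t
    have "(\<Sum>t\<in>T. sc (u t) (vec t)) = sc (u t1) (vec t1) + (\<Sum>t\<in>T - {t1}. sc (u t) (vec t))"
      by (rule sum.remove[OF finT t(1)])
    also have "(\<Sum>t\<in>T - {t1}. sc (u t) (vec t)) = sc (u t2) (vec t2) + (\<Sum>t\<in>T - {t1} - {t2}. sc (u t) (vec t))"
      by (rule sum.remove) (use finT t in auto)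
    also have "(\<Sum>t\<in>T - {t1} - {t2}. sc (u t) (vec t)) = 0"
      by (rule sum.neutral) (auto simp: u_def)
    finally have "(\<Sum>t\<in>T. sc (u t) (vec t)) = 0"
      using t by (simp add: u_def sc_one sc_minus_one)
    then have "u t1 = 0" using key t(1) by blast
    then show False by (simp add: u_def)
  qed
  have indep: "scv.independent (vec ` T)"
  proof (rule scv.independent_if_scalars_zero)
    show "finite (vec ` T)" using finT by simp
    fix g x assume s: "(\<Sum>x\<in>vec ` T. sc (g x) x) = 0" and x: "x \<in> vec ` T"
    have "(\<Sum>t\<in>T. sc (g (vec t)) (vec t)) = 0"
      using s by (simp add: sum.reindex[OF inj])
    then show "g x = 0" using key[of "\<lambda>t. g (vec t)"] x by auto
  qed
  have degvec: "deg_le N (vec t)" if "t \<in> T" for t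
  proof -
    have d1f: "deg_le d1 f" and d2h: "deg_le d2 h" by (simp_all add: deg_le_iff d1_def d2_def)
    have mo: "deg_le k (mo m)" if "m \<in> Mk k" for m k
      using that by (simp add: deg_le_iff mo_def tdeg_mono2 Mk_def)
    show ?thesis
    proof (cases t)
      case (Inl m)
      then have "m \<in> A" using that by (auto simp: T_def)
      then have "deg_le (d1 + (N - d1)) (f * mo m)" using d1f mo A_def deg_le_mult by blast
      then show ?thesis using Inl by (simp add: vec_def N_def add.assoc)
    next
      case (Inr r)
      show ?thesis
      proof (cases r)
        case (Inl m)
        then have "m \<in> B" using that Inr by (auto simp: T_def)
        then have "m \<in> Mk (N - d2)" by (simp add: B_def)
        then have "deg_le (d2 + (N - d2)) (h * mo m)" using d2h mo deg_le_mult by blast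
        then show ?thesis using Inl Inr by (simp add: vec_def N_def add_ac)
      next
        case (Inr z)
        have "deg_le (card Z) (Lag Z z)" by (rule deg_Lag[OF finZ])
        then show ?thesis using Inr \<open>t = Inr r\<close> by (simp add: vec_def N_def deg_le_mono)
      qed
    qed
  qed
  have span: "vec ` T \<subseteq> scv.span (mo ` Mk N)"
  proof
    fix v assume "v \<in> vec ` T"
    then have dv: "deg_le N v" using degvec by blast
    have "v = (\<Sum>m\<in>Mk N. sc (coeff2 v (fst m) (snd m)) (mo m))"
      using poly_expand[OF dv] by (simp add: Mk_def mo_def)
    also have "\<dots> \<in> scv.span (mo ` Mk N)"
      by (intro scv.span_sum scv.span_scale scv.span_base) simp
    finally show "v \<in> scv.span (mo ` Mk N)" .
  qed
  have "card (vec ` T) \<le> card (mo ` Mk N)"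
    using scv.independent_span_bound[OF _ indep span] by simp
  also have "\<dots> \<le> card (Mk N)" by (rule card_image_le) simp
  finally have "card T \<le> card (Mk N)" using card_image[OF inj] by simp
  moreover have "card T = card A + (card B + card Z)"
    unfolding T_def using finA finB finZ by (simp add: card_Plus)
  moreover have "card (Mk N) + card (Mk (N - d1 - d2)) = card (Mk (N - d1)) + card (Mk (N - d2)) + d1 * d2"
    by (rule count_identity) (simp add: N_def)
  ultimately have "card Z \<le> d1 * d2"
    using cardB cardTrle unfolding A_def by linarith
  then show ?thesis by (simp add: d1_def d2_def)
qed


lemma const_unit: "c \<noteq> 0 \<Longrightarrow> is_unit ([:[:c:]:] :: P2)"
proof -
  assume c: "c \<noteq> 0"
  have "is_unit [:c:]" using is_unit_const_poly_iff[of c] c by (simp add: dvd_field_iff)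
  then show ?thesis using is_unit_const_poly_iff[of "[:c:]"] by simp
qed

lemma prime_nonconst:
  assumes "prime (p :: P2)"
  shows "\<not> (\<exists>c. p = [:[:c:]:])"
proof
  assume "\<exists>c. p = [:[:c:]:]"
  then obtain c where c: "p = [:[:c:]:]" by blast
  show False
  proof (cases "c = 0")
    case True then show False using assms c by simp
  next
    case False then show False using const_unit[OF False] assms c not_prime_unit by blast
  qed
qed

lemma x_nonconst: "\<not> (\<exists>c. ([:[:0,1:]:] :: P2) = [:[:c:]:])"
  by auto

lemma unit_no_zero:
  assumes "is_unit (f :: P2)"
  shows "E2 x y f \<noteq> 0"
proof
  assume z: "E2 x y f = 0"
  obtain g where "1 = f * g" using assms by (elim dvdE)
  then have "E2 x y 1 = E2 x y (f * g)" by (rule arg_cong)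
  then have "E2 x y 1 = E2 x y f * E2 x y g" by (simp only: E2_mult)
  moreover have "E2 x y 1 = 1" using E2_const[of x y 1] by (simp add: one_pCons)
  ultimately show False using z by simp
qed

lemma dvd_sc: "q dvd s \<Longrightarrow> q dvd sc c s"
  unfolding sc_conv by (rule dvd_mult)

lemma prime_dvd_sc:
  assumes "prime q" "q dvd sc c s" "c \<noteq> 0"
  shows "q dvd s"
proof -
  have "q dvd [:[:c:]:] \<or> q dvd s" using prime_dvd_multD[OF assms(1)] assms(2) unfolding sc_conv by blast
  moreover have "\<not> q dvd [:[:c:]:]"
    using const_unit[OF assms(3)] assms(1) not_prime_unit dvd_unit_imp_unit by blast
  ultimately show ?thesis by blast
qed

lemma avoid_step:
  fixes w s :: P2 and Q :: "P2 set"
  assumes finQ: "finite Q" and pr: "\<And>q. q \<in> Q \<Longrightarrow> prime q"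
    and w: "\<And>q. q \<in> Q \<Longrightarrow> \<not> q dvd w" and prp: "prime p" and ps: "\<not> p dvd s"
  shows "\<exists>lam. \<forall>q\<in>insert p Q. \<not> q dvd (w + sc lam s)"
proof -
  define Bad where "Bad q = {lam. q dvd (w + sc lam s)}" for q
  have sub: "l1 = l2" if q: "q \<in> insert p Q" and l: "l1 \<in> Bad q" "l2 \<in> Bad q" for q l1 l2
  proof (rule ccontr)
    assume ne: "l1 \<noteq> l2"
    have prq: "prime q" using q pr prp by auto
    have "q dvd (w + sc l1 s) - (w + sc l2 s)" using l dvd_diff unfolding Bad_def by blast
    moreover have "(w + sc l1 s) - (w + sc l2 s) = sc (l1 - l2) s"
      by (simp add: sc_def smult_diff_left[symmetric])
    ultimately have "q dvd s" using prime_dvd_sc[OF prq] ne by simp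
    then have "q dvd sc l1 s" by (rule dvd_sc)
    then have "q dvd w" using l(1) by (simp add: Bad_def) (metis add_diff_cancel_right' dvd_diff)
    then show False using q w ps \<open>q dvd s\<close> by auto
  qed
  have "finite (Bad q)" if "q \<in> insert p Q" for q
  proof (cases "Bad q = {}")
    case False
    then obtain l where "l \<in> Bad q" by blast
    then have "Bad q = {l}" using sub[OF that] by blast
    then show ?thesis by simp
  qed simp
  then have "finite (\<Union>q\<in>insert p Q. Bad q)" using finQ by blast
  then obtain lam where "lam \<notin> (\<Union>q\<in>insert p Q. Bad q)"
    using infinite_UNIV_char_0[where 'a=complex] by (metis ex_new_if_finite)
  then show ?thesis by (auto simp: Bad_def)
qed

lemma common_factor:
  fixes S :: "P2 set" and I :: "(complex \<times> complex) set" and d :: nat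
  assumes degS: "\<And>s. s \<in> S \<Longrightarrow> deg_le d s"
    and vanS: "\<And>s z. s \<in> S \<Longrightarrow> z \<in> I \<Longrightarrow> E2 (fst z) (snd z) s = 0"
    and big: "infinite I \<or> d^2 < card I"
  shows "\<exists>G. \<not> (\<exists>c. G = [:[:c:]:]) \<and> (\<forall>s\<in>S. G dvd s)"
proof (cases "S \<subseteq> {0}")
  case True
  then show ?thesis using x_nonconst by (intro exI[of _ "[:[:0,1:]:]"]) auto
next
  case False
  then obtain f where fS: "f \<in> S" and f0: "f \<noteq> 0" by blast
  obtain Z where ZI: "Z \<subseteq> I" and finZ: "finite Z" and cZ: "d^2 < card Z"
  proof (cases "finite I")
    case True then show ?thesis using big that by blast
  next
    case False
    then obtain Z where "Z \<subseteq> I" "finite Z" "card Z = d^2 + 1"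
      using infinite_arbitrarily_large by blast
    then show ?thesis using that by simp
  qed
  then obtain z0 where z0: "z0 \<in> I" by (metis card.empty less_zeroE subset_empty ex_in_conv)
  define W where "W = {w. deg_le d w \<and> (\<forall>z\<in>I. E2 (fst z) (snd z) w = 0)}"
  have SW: "S \<subseteq> W" using degS vanS by (auto simp: W_def)
  have Wadd: "w1 + w2 \<in> W" if "w1 \<in> W" "w2 \<in> W" for w1 w2
    using that by (auto simp: W_def deg_le_add E2_add)
  have Wsc: "sc c w \<in> W" if "w \<in> W" for w c
    using that by (auto simp: W_def deg_le_sc E2_sc)
  have fnu: "\<not> is_unit f" using unit_no_zero vanS[OF fS z0] by blast
  define P where "P = prime_factors f"
  have finP: "finite P" by (simp add: P_def)
  have prP: "prime q" if "q \<in> P" for q using that by (simp add: P_def in_prime_factors_iff)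
  show ?thesis
  proof (cases "\<exists>p\<in>P. \<forall>s\<in>S. p dvd s")
    case True
    then obtain p where "p \<in> P" "\<forall>s\<in>S. p dvd s" by blast
    then show ?thesis using prime_nonconst[OF prP] by blast
  next
    case False
    then have ex: "\<exists>s\<in>S. \<not> p dvd s" if "p \<in> P" for p using that by blast
    have avoid: "Q \<subseteq> P \<Longrightarrow> \<exists>w\<in>W. \<forall>q\<in>Q. \<not> q dvd w" for Q
    proof (induction Q rule: infinite_finite_induct)
      case (infinite Q) then show ?case using finP finite_subset by blast
    next
      case empty then show ?case using SW fS by blast
    next
      case (insert p Q)
      then obtain w where w: "w \<in> W" "\<forall>q\<in>Q. \<not> q dvd w" by blast
      obtain s where s: "s \<in> S" "\<not> p dvd s" using ex insert.prems by blast
      obtain lam where lam: "\<forall>q\<in>insert p Q. \<not> q dvd (w + sc lam s)"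
        using avoid_step[OF insert.hyps(1) _ _ _ s(2), of w] w(2) prP insert.prems by blast
      moreover have "w + sc lam s \<in> W" using Wadd Wsc w(1) SW s(1) by blast
      ultimately show ?case by blast
    qed
    obtain h where hW: "h \<in> W" and hP: "\<forall>q\<in>P. \<not> q dvd h" using avoid[of P] by blast
    have cop: "coprime f h"
    proof (rule ccontr)
      assume nc: "\<not> coprime f h"
      have "gcd f h \<noteq> 0" using f0 by simp
      moreover have "\<not> is_unit (gcd f h)" using nc is_unit_gcd by blast
      ultimately obtain q where q: "q dvd gcd f h" "prime q" using prime_divisor_exists by blast
      then have "q \<in> P" using f0 by (simp add: P_def in_prime_factors_iff)
      moreover have "q dvd h" using q(1) by simp
      ultimately show False using hP by blast
    qed
    have h0: "h \<noteq> 0" using cop fnu by auto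
    have "card Z \<le> tdeg f * tdeg h"
    proof (rule bezout[OF f0 h0 cop finZ])
      fix z assume "z \<in> Z"
      then have "z \<in> I" using ZI by blast
      then show "E2 (fst z) (snd z) f = 0" "E2 (fst z) (snd z) h = 0"
        using vanS[OF fS] hW by (auto simp: W_def)
    qed
    moreover have "tdeg f \<le> d" using degS[OF fS] by (simp add: deg_le_iff)
    moreover have "tdeg h \<le> d" using hW by (simp add: W_def deg_le_iff)
    ultimately have "card Z \<le> d * d" by (meson mult_le_mono order_trans)
    then show ?thesis using cZ by (simp add: power2_eq_square)
  qed
qed


lemma sc_sum_left: "sc (sum f A) x = (\<Sum>i\<in>A. sc (f i) x)"
  by (rule scv.scale_sum_left)
lemma sc_sum_right: "sc c (sum f A) = (\<Sum>i\<in>A. sc c (f i))"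
  by (rule scv.scale_sum_right)
lemma sc_sc: "sc a (sc b x) = sc (a * b) x"
  by (rule scv.scale_scale)
lemma sc_add_right: "sc c (x + y) = sc c x + sc c y"
  by (rule scv.scale_right_distrib)
lemma sc_diff_right: "sc c (x - y) = sc c x - sc c y"
  by (rule scv.scale_right_diff_distrib)

lemma basis_mod:
  fixes G :: P2 and a :: "'i \<Rightarrow> P2" and B :: "'i set"
  assumes "finite B"
  shows "\<exists>r (b :: nat \<Rightarrow> P2) (lam :: 'i \<Rightarrow> nat \<Rightarrow> complex).
     (\<forall>\<beta>\<in>B. G dvd (a \<beta> - (\<Sum>i<r. sc (lam \<beta> i) (b i)))) \<and>
     (\<forall>c. G dvd (\<Sum>i<r. sc (c i) (b i)) \<longrightarrow> (\<forall>i<r. c i = 0))"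
  using assms
proof (induction B rule: finite_induct)
  case empty
  show ?case by (rule exI[of _ 0]) simp
next
  case (insert \<beta>0 B)
  from insert.IH obtain r :: nat and b :: "nat \<Rightarrow> P2" and lam :: "'i \<Rightarrow> nat \<Rightarrow> complex" where
    h1: "\<forall>\<beta>\<in>B. G dvd (a \<beta> - (\<Sum>i<r. sc (lam \<beta> i) (b i)))" and
    h2: "\<forall>c. G dvd (\<Sum>i<r. sc (c i) (b i)) \<longrightarrow> (\<forall>i<r. c i = 0)" by auto
  show ?case
  proof (cases "\<exists>c. G dvd (a \<beta>0 - (\<Sum>i<r. sc (c i) (b i)))")
    case True
    then obtain c where c: "G dvd (a \<beta>0 - (\<Sum>i<r. sc (c i) (b i)))" by blast
    have "\<forall>\<beta>\<in>insert \<beta>0 B. G dvd (a \<beta> - (\<Sum>i<r. sc ((lam(\<beta>0 := c)) \<beta> i) (b i)))"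
      using h1 c insert.hyps(2) by auto
    then show ?thesis using h2 by blast
  next
    case False
    define b' where "b' = b(r := a \<beta>0)"
    define lam' where "lam' \<beta> i = (if \<beta> = \<beta>0 then (if i = r then 1 else 0) else (if i = r then 0 else lam \<beta> i))" for \<beta> i
    have sb: "(\<Sum>i<r. sc (c i) (b' i)) = (\<Sum>i<r. sc (c i) (b i))" for c
      by (rule sum.cong) (simp_all add: b'_def)
    have p1: "\<forall>\<beta>\<in>insert \<beta>0 B. G dvd (a \<beta> - (\<Sum>i<Suc r. sc (lam' \<beta> i) (b' i)))"
    proof
      fix \<beta> assume \<beta>: "\<beta> \<in> insert \<beta>0 B"
      show "G dvd (a \<beta> - (\<Sum>i<Suc r. sc (lam' \<beta> i) (b' i)))"
      proof (cases "\<beta> = \<beta>0")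
        case True
        have "(\<Sum>i<r. sc (lam' \<beta> i) (b' i)) = 0"
          by (rule sum.neutral) (simp add: lam'_def True)
        then show ?thesis using True by (simp add: lam'_def b'_def sc_one)
      next
        case False
        then have "\<beta> \<in> B" using \<beta> by simp
        have "(\<Sum>i<r. sc (lam' \<beta> i) (b' i)) = (\<Sum>i<r. sc (lam \<beta> i) (b i))"
          by (rule sum.cong) (simp_all add: lam'_def b'_def False)
        then show ?thesis using h1 \<open>\<beta> \<in> B\<close> False by (simp add: lam'_def)
      qed
    qed
    have p2: "\<forall>c. G dvd (\<Sum>i<Suc r. sc (c i) (b' i)) \<longrightarrow> (\<forall>i<Suc r. c i = 0)"
    proof (rule allI, rule impI)
      fix c assume d: "G dvd (\<Sum>i<Suc r. sc (c i) (b' i))"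
      then have d': "G dvd (\<Sum>i<r. sc (c i) (b i)) + sc (c r) (a \<beta>0)"
        by (simp add: sb b'_def)
      have cr: "c r = 0"
      proof (rule ccontr)
        assume cr: "c r \<noteq> 0"
        define c' where "c' i = - c i / c r" for i
        have e1: "sc (1 / c r) (\<Sum>i<r. sc (c i) (b i)) = (\<Sum>i<r. sc (c i / c r) (b i))"
          unfolding sc_sum_right sc_sc by (rule sum.cong) simp_all
        have e2: "(\<Sum>i<r. sc (c' i) (b i)) = - (\<Sum>i<r. sc (c i / c r) (b i))"
          unfolding sum_negf[symmetric] c'_def
          by (rule sum.cong) (simp_all only: minus_divide_left[symmetric] scv.scale_minus_left)
        have e3: "sc (1 / c r) (sc (c r) (a \<beta>0)) = a \<beta>0"
          using cr by (simp add: sc_sc sc_one)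
        have "a \<beta>0 - (\<Sum>i<r. sc (c' i) (b i)) = sc (1 / c r) ((\<Sum>i<r. sc (c i) (b i)) + sc (c r) (a \<beta>0))"
          unfolding sc_add_right e1 e2 e3 by simp
        then have "G dvd (a \<beta>0 - (\<Sum>i<r. sc (c' i) (b i)))" using dvd_sc[OF d'] by simp
        then show False using False by blast
      qed
      then have "G dvd (\<Sum>i<r. sc (c i) (b i))" using d' by simp
      then have "\<forall>i<r. c i = 0" using h2 by blast
      then show "\<forall>i<Suc r. c i = 0" using cr less_Suc_eq by auto
    qed
    show ?thesis using p1 p2 by blast
  qed
qed


definition C4 :: "complex \<Rightarrow> complex poly poly poly poly" where "C4 c = [:[:[:[:c:]:]:]:]"
definition STm :: "nat \<times> nat \<Rightarrow> complex poly poly poly poly" where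
  "STm \<beta> = monom (monom (1::P2) (fst \<beta>)) (snd \<beta>)"

lemma Exy_add: "Exy (a + b) = Exy a + Exy b" by (simp add: Exy_def)
lemma Exy_mult: "Exy (a * b) = Exy a * Exy b" by (simp add: Exy_def)
lemma Exy_0[simp]: "Exy 0 = 0" by (simp add: Exy_def)
lemma Exy_sum: "Exy (sum f A) = (\<Sum>x\<in>A. Exy (f x))"
  by (induction A rule: infinite_finite_induct) (simp_all add: Exy_add)
lemma Exy_sc: "Exy (sc c x) = C4 c * Exy x" by (simp add: Exy_def C4_def sc_def)

lemma CC_add: "[:[:a + b:]:] = [:[:a:]:] + ([:[:b:]:] :: P2)" by simp
lemma CC_mult: "[:[:a * b:]:] = [:[:a:]:] * ([:[:b:]:] :: P2)" by simp
lemma mCC_add: "map_poly (\<lambda>c. [:[:c:]:]) (a + b) = map_poly (\<lambda>c. [:[:c:]:]) a + (map_poly (\<lambda>c. [:[:c:]:]) b :: complex poly poly poly)"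
  by (rule map_poly_add_hom) simp_all
lemma mCC_mult: "map_poly (\<lambda>c. [:[:c:]:]) (a * b) = map_poly (\<lambda>c. [:[:c:]:]) a * (map_poly (\<lambda>c. [:[:c:]:]) b :: complex poly poly poly)"
  by (rule map_poly_mult_hom) simp_all
lemma Est_add: "Est (a + b) = Est a + Est b"
  unfolding Est_def by (rule map_poly_add_hom) (simp_all add: mCC_add)
lemma Est_mult: "Est (a * b) = Est a * Est b"
  unfolding Est_def by (rule map_poly_mult_hom) (simp_all add: mCC_add mCC_mult)
lemma Est_0[simp]: "Est 0 = 0" by (simp add: Est_def)
lemma Est_sum: "Est (sum f A) = (\<Sum>x\<in>A. Est (f x))"
  by (induction A rule: infinite_finite_induct) (simp_all add: Est_add)

lemma Est_mono2: "Est (mono2 c e) = STm (c, e)"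
  by (simp add: Est_def mono2_def STm_def map_poly_monom one_pCons)

lemma Est_sc_mono2: "Est (sc c (mono2 (fst \<beta>) (snd \<beta>))) = C4 c * STm \<beta>"
  by (simp only: sc_conv Est_mult Est_const Est_mono2 C4_def prod.collapse)

lemma E4_0[simp]: "E4 x y s t 0 = 0" by (simp add: E4_def)
lemma E4_sum: "E4 x y s t (sum f A) = (\<Sum>i\<in>A. E4 x y s t (f i))"
  by (induction A rule: infinite_finite_induct) (simp_all add: E4_add)

lemma E4_STm: "E4 x y s t (STm \<beta>) = s ^ fst \<beta> * t ^ snd \<beta>"
  using E4_Est[of x y s t "mono2 (fst \<beta>) (snd \<beta>)"] by (simp add: Est_mono2 E2_mono2)

lemma Exy_STm: "Exy a * STm \<beta> = monom (monom a (fst \<beta>)) (snd \<beta>)"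
  by (simp add: Exy_def STm_def smult_monom)

lemma p_decomp:
  fixes p :: "complex poly poly poly poly"
  assumes bound: "\<And>a b c e. coeff4 p a b c e \<noteq> 0 \<Longrightarrow> a + b + c + e \<le> d"
  shows "p = (\<Sum>\<beta>\<in>Mk d. Exy (coeff (coeff p (snd \<beta>)) (fst \<beta>)) * STm \<beta>)"
proof (rule poly_eqI, rule poly_eqI)
  fix e' c'
  have "coeff (coeff (\<Sum>\<beta>\<in>Mk d. Exy (coeff (coeff p (snd \<beta>)) (fst \<beta>)) * STm \<beta>) e') c'
      = (\<Sum>\<beta>\<in>Mk d. if \<beta> = (c', e') then coeff (coeff p e') c' else 0)"
    unfolding Exy_STm coeff_sum by (rule sum.cong) (auto simp: coeff_monom)
  also have "\<dots> = (if (c', e') \<in> Mk d then coeff (coeff p e') c' else 0)"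
    by (simp add: sum.delta')
  also have "\<dots> = coeff (coeff p e') c'"
  proof (cases "(c', e') \<in> Mk d")
    case False
    have "coeff (coeff p e') c' = 0"
    proof (rule poly2_eqI)
      fix a b show "coeff2 (coeff (coeff p e') c') a b = coeff2 0 a b"
        using bound[of a b c' e'] False by (auto simp: coeff2_def coeff4_def Mk_def)
    qed
    then show ?thesis by simp
  qed simp
  finally show "coeff (coeff p e') c' = coeff (coeff (\<Sum>\<beta>\<in>Mk d. Exy (coeff (coeff p (snd \<beta>)) (fst \<beta>)) * STm \<beta>) e') c'" by simp
qed


theorem backward:
  fixes F :: mpoly and d :: nat and I J :: "(complex \<times> complex) set"
  assumes Fv: "poly_in_vars {0,1,2,3} F" and Fd: "total_degree F = d"
    and bI: "infinite I \<or> d^2 < card I" and bJ: "infinite J \<or> d^2 < card J"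
    and IJ: "I \<times> J \<subseteq> zero_set4 F"
  shows "cartesian F"
proof -
  have V: "{0,1,2,3} \<subseteq> {0,1,2,3::nat}" by simp
  obtain p where pF: "psi4 p = F" and pb0: "\<forall>a b c e. coeff4 p a b c e \<noteq> 0 \<longrightarrow> a+b+c+e \<le> total_degree F \<and>
            (0\<notin>{0,1,2,3::nat} \<longrightarrow> a=0) \<and> (1\<notin>{0,1,2,3::nat} \<longrightarrow> b=0) \<and> (2\<notin>{0,1,2,3::nat} \<longrightarrow> c=0) \<and> (3\<notin>{0,1,2,3::nat} \<longrightarrow> e=0)"
    using surj_psi4[OF Fv V] by (elim exE conjE) blast
  have pb: "a+b+c+e \<le> d" if "coeff4 p a b c e \<noteq> 0" for a b c e
    using pb0[rule_format, OF that] Fd by simp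
  define aa where "aa \<beta> = coeff (coeff p (snd \<beta>)) (fst \<beta>)" for \<beta>
  have pdec: "p = (\<Sum>\<beta>\<in>Mk d. Exy (aa \<beta>) * STm \<beta>)"
    unfolding aa_def by (rule p_decomp[OF pb])
  have degaa: "deg_le d (aa \<beta>)" for \<beta>
    unfolding deg_le_def
  proof (intro allI impI)
    fix a b assume "coeff2 (aa \<beta>) a b \<noteq> 0"
    then have "coeff4 p a b (fst \<beta>) (snd \<beta>) \<noteq> 0" by (simp add: aa_def coeff2_def coeff4_def)
    then show "a + b \<le> d" using pb by fastforce
  qed
  have vanish: "E4 x y s t p = 0" if "(x, y) \<in> I" "(s, t) \<in> J" for x y s t
  proof -
    have "((x, y), (s, t)) \<in> zero_set4 F" using IJ that by blast
    then show ?thesis using eval_psi4[of p x y s t] pF by (simp add: zero_set4_def)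
  qed
  have E4p: "E4 x y s t p = (\<Sum>\<beta>\<in>Mk d. E2 x y (aa \<beta>) * (s ^ fst \<beta> * t ^ snd \<beta>))" for x y s t
    by (subst pdec) (simp add: E4_sum E4_mult E4_Exy E4_STm)
  define fq where "fq s t = (\<Sum>\<beta>\<in>Mk d. sc (s ^ fst \<beta> * t ^ snd \<beta>) (aa \<beta>))" for s t
  have E2fq: "E2 x y (fq s t) = E4 x y s t p" for x y s t
    by (simp add: fq_def E2_sum E2_sc E4p mult.commute)
  have degfq: "deg_le d (fq s t)" for s t
    unfolding fq_def by (intro deg_le_sum deg_le_sc degaa)
  define S1 where "S1 = (\<lambda>q. fq (fst q) (snd q)) ` J"
  obtain G1 where G1nc: "\<not> (\<exists>c. G1 = [:[:c:]:])" and G1dvd: "\<forall>s\<in>S1. G1 dvd s"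
  proof -
    have "\<exists>G. \<not> (\<exists>c. G = [:[:c:]:]) \<and> (\<forall>s\<in>S1. G dvd s)"
    proof (rule common_factor[OF _ _ bI])
      fix s assume "s \<in> S1" then show "deg_le d s" using degfq by (auto simp: S1_def)
    next
      fix s z assume "s \<in> S1" "z \<in> I"
      then show "E2 (fst z) (snd z) s = 0" using vanish E2fq by (auto simp: S1_def)
    qed
    then show ?thesis using that by blast
  qed
  obtain r :: nat and b :: "nat \<Rightarrow> P2" and lam :: "nat \<times> nat \<Rightarrow> nat \<Rightarrow> complex" where
    bm1: "\<forall>\<beta>\<in>Mk d. G1 dvd (aa \<beta> - (\<Sum>i<r. sc (lam \<beta> i) (b i)))" and
    bm2: "\<forall>c. G1 dvd (\<Sum>i<r. sc (c i) (b i)) \<longrightarrow> (\<forall>i<r. c i = 0)"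
    using basis_mod[of "Mk d" G1 aa] by auto
  define e where "e i = (\<Sum>\<beta>\<in>Mk d. sc (lam \<beta> i) (mono2 (fst \<beta>) (snd \<beta>)))" for i
  have E2e: "E2 s t (e i) = (\<Sum>\<beta>\<in>Mk d. lam \<beta> i * (s ^ fst \<beta> * t ^ snd \<beta>))" for s t i
    by (simp add: e_def E2_sum E2_sc E2_mono2)
  have e_van: "\<forall>i<r. E2 s t (e i) = 0" if st: "(s, t) \<in> J" for s t
  proof -
    define X where "X = (\<Sum>i<r. sc (E2 s t (e i)) (b i))"
    define cc where "cc \<beta> = s ^ fst \<beta> * t ^ snd \<beta>" for \<beta>
    have X1: "X = (\<Sum>i<r. \<Sum>\<beta>\<in>Mk d. sc (cc \<beta>) (sc (lam \<beta> i) (b i)))"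
      unfolding X_def E2e sc_sum_left cc_def
      by (intro sum.cong refl) (simp add: sc_sc ac_simps)
    also have "\<dots> = (\<Sum>\<beta>\<in>Mk d. \<Sum>i<r. sc (cc \<beta>) (sc (lam \<beta> i) (b i)))"
      by (rule sum.swap)
    also have "\<dots> = (\<Sum>\<beta>\<in>Mk d. sc (cc \<beta>) (\<Sum>i<r. sc (lam \<beta> i) (b i)))"
      by (simp only: sc_sum_right)
    finally have X: "X = (\<Sum>\<beta>\<in>Mk d. sc (cc \<beta>) (\<Sum>i<r. sc (lam \<beta> i) (b i)))" .
    have fqc: "fq s t = (\<Sum>\<beta>\<in>Mk d. sc (cc \<beta>) (aa \<beta>))" by (simp add: fq_def cc_def)
    have "fq s t - X = (\<Sum>\<beta>\<in>Mk d. sc (cc \<beta>) (aa \<beta> - (\<Sum>i<r. sc (lam \<beta> i) (b i))))"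
      by (simp only: fqc X sum_subtractf[symmetric] sc_diff_right)
    moreover have "G1 dvd (\<Sum>\<beta>\<in>Mk d. sc (cc \<beta>) (aa \<beta> - (\<Sum>i<r. sc (lam \<beta> i) (b i))))"
      by (rule dvd_sum, rule dvd_sc) (use bm1 in blast)
    ultimately have d1: "G1 dvd fq s t - X" by simp
    have d2: "G1 dvd fq s t" using G1dvd st by (auto simp: S1_def)
    have "X = fq s t - (fq s t - X)" by simp
    then have "G1 dvd X" using d1 d2 dvd_diff by metis
    then have "G1 dvd (\<Sum>i<r. sc ((\<lambda>i. E2 s t (e i)) i) (b i))" by (simp add: X_def)
    from bm2[rule_format, OF this] show ?thesis by simp
  qed
  have dege: "deg_le d (e i)" for i
    unfolding e_def
  proof (intro deg_le_sum deg_le_sc)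
    fix \<beta> assume "\<beta> \<in> Mk d"
    then show "deg_le d (mono2 (fst \<beta>) (snd \<beta>))" by (simp add: deg_le_iff tdeg_mono2 Mk_def)
  qed
  obtain G2 where G2nc: "\<not> (\<exists>c. G2 = [:[:c:]:])" and G2dvd: "\<forall>s\<in>e ` {..<r}. G2 dvd s"
  proof -
    have "\<exists>G. \<not> (\<exists>c. G = [:[:c:]:]) \<and> (\<forall>s\<in>e ` {..<r}. G dvd s)"
    proof (rule common_factor[OF _ _ bJ])
      fix s assume "s \<in> e ` {..<r}" then show "deg_le d s" using dege by auto
    next
      fix s z assume "s \<in> e ` {..<r}" "z \<in> J"
      then show "E2 (fst z) (snd z) s = 0" using e_van[of "fst z" "snd z"] by auto
    qed
    then show ?thesis using that by blast
  qed
  have "\<forall>i\<in>{..<r}. \<exists>v. e i = G2 * v" using G2dvd by (auto elim!: dvdE)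
  then obtain u where u: "\<And>i. i < r \<Longrightarrow> e i = G2 * u i" by (metis lessThan_iff)
  have "\<forall>\<beta>\<in>Mk d. \<exists>v. aa \<beta> - (\<Sum>i<r. sc (lam \<beta> i) (b i)) = G1 * v" using bm1 by (auto elim!: dvdE)
  then obtain w where w: "\<And>\<beta>. \<beta> \<in> Mk d \<Longrightarrow> aa \<beta> - (\<Sum>i<r. sc (lam \<beta> i) (b i)) = G1 * w \<beta>" by metis
  define H where "H = (\<Sum>\<beta>\<in>Mk d. Exy (w \<beta>) * STm \<beta>)"
  define L where "L = (\<Sum>i<r. Exy (b i) * Est (u i))"
  have a1: "aa \<beta> = (\<Sum>i<r. sc (lam \<beta> i) (b i)) + G1 * w \<beta>" if "\<beta> \<in> Mk d" for \<beta>
    using w[OF that] by (simp add: algebra_simps)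
  have "p = (\<Sum>\<beta>\<in>Mk d. Exy ((\<Sum>i<r. sc (lam \<beta> i) (b i)) + G1 * w \<beta>) * STm \<beta>)"
    by (subst pdec) (rule sum.cong, simp_all add: a1)
  also have "\<dots> = (\<Sum>\<beta>\<in>Mk d. (\<Sum>i<r. C4 (lam \<beta> i) * Exy (b i)) * STm \<beta> + Exy G1 * (Exy (w \<beta>) * STm \<beta>))"
    by (rule sum.cong) (simp_all only: Exy_add Exy_mult Exy_sum Exy_sc distrib_right mult.assoc)
  also have "\<dots> = (\<Sum>\<beta>\<in>Mk d. (\<Sum>i<r. C4 (lam \<beta> i) * Exy (b i)) * STm \<beta>) + Exy G1 * H"
    by (simp only: sum.distrib H_def sum_distrib_left)
  also have "(\<Sum>\<beta>\<in>Mk d. (\<Sum>i<r. C4 (lam \<beta> i) * Exy (b i)) * STm \<beta>) = (\<Sum>i<r. Exy (b i) * Est (e i))"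
  proof -
    have "(\<Sum>\<beta>\<in>Mk d. (\<Sum>i<r. C4 (lam \<beta> i) * Exy (b i)) * STm \<beta>)
        = (\<Sum>\<beta>\<in>Mk d. \<Sum>i<r. Exy (b i) * (C4 (lam \<beta> i) * STm \<beta>))"
      by (intro sum.cong refl) (simp add: sum_distrib_right sum_distrib_left mult_ac)
    also have "\<dots> = (\<Sum>i<r. \<Sum>\<beta>\<in>Mk d. Exy (b i) * (C4 (lam \<beta> i) * STm \<beta>))"
      by (rule sum.swap)
    also have "\<dots> = (\<Sum>i<r. Exy (b i) * Est (e i))"
      by (simp add: e_def Est_sum Est_sc_mono2 sum_distrib_left)
    finally show ?thesis .
  qed
  also have "(\<Sum>i<r. Exy (b i) * Est (e i)) = Est G2 * L"
    unfolding L_def sum_distrib_left by (rule sum.cong) (simp_all add: u Est_mult mult_ac)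
  finally have key: "p = Exy G1 * H + Est G2 * L" by (simp add: add.commute)
  have FF: "F = psi4 (Exy G1) * psi4 H + psi4 (Est G2) * psi4 L"
    using pF key by (simp add: psi4_add psi4_mult)
  show "cartesian F"
    unfolding cartesian_def
    using piv_psi4_Exy[of G1] piv_psi4_Est[of G2] piv_psi4[of H] piv_psi4[of L]
      nonconst_xy[OF G1nc] nonconst_st[OF G2nc] FF by blast
qed


theorem theorem2p5:
  fixes F :: mpoly and d :: nat
  assumes "poly_in_vars {0, 1, 2, 3} F"
    and "total_degree F = d"
  shows "cartesian F \<longleftrightarrow>
    (\<exists>I J :: (complex \<times> complex) set.
        (infinite I \<or> d ^ 2 < card I) \<and> (infinite J \<or> d ^ 2 < card J) \<and>
        I \<times> J \<subseteq> zero_set4 F)"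
proof
  assume "cartesian F"
  then show "\<exists>I J :: (complex \<times> complex) set.
        (infinite I \<or> d ^ 2 < card I) \<and> (infinite J \<or> d ^ 2 < card J) \<and>
        I \<times> J \<subseteq> zero_set4 F"
  proof -
    obtain I J :: "(complex \<times> complex) set" where "infinite I" "infinite J" "I \<times> J \<subseteq> zero_set4 F"
      using forward[OF \<open>cartesian F\<close>] by blast
    then show ?thesis by blast
  qed
next
  assume "\<exists>I J :: (complex \<times> complex) set.
        (infinite I \<or> d ^ 2 < card I) \<and> (infinite J \<or> d ^ 2 < card J) \<and>
        I \<times> J \<subseteq> zero_set4 F"
  then obtain I J :: "(complex \<times> complex) set" where
    "infinite I \<or> d ^ 2 < card I" "infinite J \<or> d ^ 2 < card J" "I \<times> J \<subseteq> zero_set4 F" by blast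
  then show "cartesian F" by (rule backward[OF assms])
qed

end
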